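(* Let $d_1,d_2,d_3\ge2$, let $\rho$ be a density operator on $\mathbb{C}^{d_1}\otimes\mathbb{C}^{d_2}\otimes\mathbb{C}^{d_3}$, let $(f,g,h)$ be a permutation of $(1,2,3)$, and let $\alpha,\beta\in\mathbb{R}$. If $\rho$ is separable under the bipartition $f|gh$, then $$\|N^{f|gh}\|_{tr}\le\sqrt{d_f-1}\left(|\alpha|\sqrt{d_g-1}+|\beta|\sqrt{d_gd_h\Big(1-\frac{1}{d_g^2}-\frac{1}{d_h^2}\Big)+1}\right).$$
   Context: Generalized Pauli operators: for an integer $d\ge2$, let $\omega$ be a fixed primitive $d$-th root of unity and $E_{m,j}$ the $d\times d$ matrix units (indices modulo $d$). Writing $u\in\{0,\dots,d^2-1\}$ uniquely as $u=di+j$ with $0\le i,j\le d-1$, set $A_u=\sum_{m=0}^{d-1}\omega^{im}E_{m,m+j}$; so $A_0=I_d$ and $\operatorname{tr}(A_uA_v^\dagger)=d\delta_{uv}$. $A^{(s)}_u$ denotes these for $d=d_s$. The coefficients of $\rho$ are $t_{u_1,u_2,u_3}=\operatorname{tr}\big(\rho\,(A^{(1)}_{u_1})^\dagger\otimes(A^{(2)}_{u_2})^\dagger\otimes(A^{(3)}_{u_3})^\dagger\big)$, so $\rho=\frac{1}{d_1d_2d_3}\sum t_{u_1,u_2,u_3}A^{(1)}_{u_1}\otimes A^{(2)}_{u_2}\otimes A^{(3)}_{u_3}$. Matrices: for $(f,g,h)$ a permutation of $(1,2,3)$, $S^{f|g}$ is the $(d_f^2-1)\times(d_g^2-1)$ matrix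 with rows indexed by $u_f\in\{1,\dots,d_f^2-1\}$, columns by $u_g\in\{1,\dots,d_g^2-1\}$, whose entry is the coefficient $t_{u_1,u_2,u_3}$ with index $u_f$ in position $f$, $u_g$ in position $g$ and $0$ in position $h$. $S_0^{f|g}=[S^{f|g}\ \ O]$ is the $(d_f^2-1)\times(d_g^2-1)(d_h^2-1)$ matrix obtained by appending the $(d_f^2-1)\times(d_g^2-1)(d_h^2-2)$ zero matrix. $S^{f|gh}$ is the $(d_f^2-1)\times(d_g^2-1)(d_h^2-1)$ matrix with rows indexed by $u_f\ge1$ and columns by pairs $(u_g,u_h)$ with $u_g,u_h\ge1$ (lexicographic order), whose entry is the coefficient with $u_f,u_g,u_h$ in positions $f,g,h$. Finally $N^{f|gh}=\alpha S_0^{f|g}+\beta S^{f|gh}$. $\rho$ is separable under $f|gh$ if $\rho=\sum_s p_s\rho^s_f\otimes\rho^s_{gh}$ (finite sum) with $p_s>0$, $\sum_sp_s=1$, $\rho^s_f$ density operators on the $f$-th factor and $\rho^s_{gh}$ density operators on the remaining two factors. $\|X\|_{tr}=\operatorname{tr}\sqrt{XX^\dagger}$ is the trace norm (sum of singular values). *)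

theory Defs
  imports "Jordan_Normal_Form.Matrix" "Jordan_Normal_Form.Char_Poly"
begin

definition mtrace :: "complex mat \<Rightarrow> complex" where
  "mtrace A = (\<Sum>i<dim_row A. A $$ (i, i))"

definition adj :: "complex mat \<Rightarrow> complex mat" where
  "adj A = mat (dim_col A) (dim_row A) (\<lambda>(i, j). cnj (A $$ (j, i)))"

definition kron :: "complex mat \<Rightarrow> complex mat \<Rightarrow> complex mat" where
  "kron A B = mat (dim_row A * dim_row B) (dim_col A * dim_col B)
     (\<lambda>(i, j). A $$ (i div dim_row B, j div dim_col B) * B $$ (i mod dim_row B, j mod dim_col B))"

definition density :: "nat \<Rightarrow> complex mat \<Rightarrow> bool" where
  "density n R \<longleftrightarrow> R \<in> carrier_mat n n \<and> adj R = R \<and>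
     (\<forall>v :: nat \<Rightarrow> complex. 0 \<le> Re (\<Sum>i<n. \<Sum>j<n. cnj (v i) * R $$ (i, j) * v j)) \<and>
     mtrace R = 1"

text \<open>Trace norm: sum of the singular values of X, i.e. the sum (with multiplicity)
  of the square roots of the eigenvalues of X X^dagger.\<close>
definition trace_norm :: "complex mat \<Rightarrow> real" where
  "trace_norm X = (let p = char_poly (X * adj X) in
     \<Sum>z\<in>{z. poly p z = 0}. real (order z p) * sqrt (Re z))"

definition prim_root :: "nat \<Rightarrow> complex \<Rightarrow> bool" where
  "prim_root d w \<longleftrightarrow> w ^ d = 1 \<and> (\<forall>k. 0 < k \<and> k < d \<longrightarrow> w ^ k \<noteq> 1)"

text \<open>Generalized Pauli operator A_u, u = d i + j:
  A_u = sum_m w^(i m) E_{m, m+j mod d}.\<close>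
definition pauli :: "nat \<Rightarrow> complex \<Rightarrow> nat \<Rightarrow> complex mat" where
  "pauli d w u = mat d d (\<lambda>(m, n).
     if n = (m + u mod d) mod d then w ^ ((u div d) * m) else 0)"

section \<open>Three-party setting. Factors are numbered 1,2,3; d s is the dimension of factor s,
  w s the chosen primitive (d s)-th root of unity.\<close>

definition totdim :: "(nat \<Rightarrow> nat) \<Rightarrow> nat" where
  "totdim d = d 1 * d 2 * d 3"

definition coord :: "(nat \<Rightarrow> nat) \<Rightarrow> nat \<Rightarrow> nat \<Rightarrow> nat" where
  "coord d k s = (if s = 1 then k div (d 2 * d 3)
                  else if s = 2 then (k div d 3) mod d 2 else k mod d 3)"

text \<open>Coefficient t_{u1,u2,u3}; the argument u maps a position s to u_s.\<close>
definition tcoef :: "(nat \<Rightarrow> nat) \<Rightarrow> (nat \<Rightarrow> complex) \<Rightarrow> complex mat \<Rightarrow> (nat \<Rightarrow> nat) \<Rightarrow> complex" where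
  "tcoef d w \<rho> u = mtrace (\<rho> * adj (kron (kron (pauli (d 1) (w 1) (u 1)) (pauli (d 2) (w 2) (u 2)))
                                          (pauli (d 3) (w 3) (u 3))))"

definition assign :: "nat \<Rightarrow> nat \<Rightarrow> nat \<Rightarrow> nat \<Rightarrow> nat \<Rightarrow> nat \<Rightarrow> nat \<Rightarrow> nat" where
  "assign f g h a b c = (\<lambda>s. if s = f then a else if s = g then b else if s = h then c else 0)"

definition S_fg :: "(nat \<Rightarrow> nat) \<Rightarrow> (nat \<Rightarrow> complex) \<Rightarrow> complex mat \<Rightarrow> nat \<Rightarrow> nat \<Rightarrow> nat \<Rightarrow> complex mat" where
  "S_fg d w \<rho> f g h = mat (d f ^ 2 - 1) (d g ^ 2 - 1)
     (\<lambda>(r, c). tcoef d w \<rho> (assign f g h (r + 1) (c + 1) 0))"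

definition S0_fg :: "(nat \<Rightarrow> nat) \<Rightarrow> (nat \<Rightarrow> complex) \<Rightarrow> complex mat \<Rightarrow> nat \<Rightarrow> nat \<Rightarrow> nat \<Rightarrow> complex mat" where
  "S0_fg d w \<rho> f g h = mat (d f ^ 2 - 1) ((d g ^ 2 - 1) * (d h ^ 2 - 1))
     (\<lambda>(r, c). if c < d g ^ 2 - 1 then S_fg d w \<rho> f g h $$ (r, c) else 0)"

text \<open>Columns indexed by pairs (u_g, u_h), u_g, u_h >= 1, in lexicographic order.\<close>
definition S_fgh :: "(nat \<Rightarrow> nat) \<Rightarrow> (nat \<Rightarrow> complex) \<Rightarrow> complex mat \<Rightarrow> nat \<Rightarrow> nat \<Rightarrow> nat \<Rightarrow> complex mat" where
  "S_fgh d w \<rho> f g h = mat (d f ^ 2 - 1) ((d g ^ 2 - 1) * (d h ^ 2 - 1))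
     (\<lambda>(r, c). tcoef d w \<rho> (assign f g h (r + 1) (c div (d h ^ 2 - 1) + 1) (c mod (d h ^ 2 - 1) + 1)))"

definition N_fgh :: "(nat \<Rightarrow> nat) \<Rightarrow> (nat \<Rightarrow> complex) \<Rightarrow> complex mat \<Rightarrow> nat \<Rightarrow> nat \<Rightarrow> nat \<Rightarrow> real \<Rightarrow> real \<Rightarrow> complex mat" where
  "N_fgh d w \<rho> f g h \<alpha> \<beta> =
     complex_of_real \<alpha> \<cdot>\<^sub>m S0_fg d w \<rho> f g h + complex_of_real \<beta> \<cdot>\<^sub>m S_fgh d w \<rho> f g h"

text \<open>Product state sigma_f (x) tau_{gh}, where tau acts on the two remaining factors
  a < b in their natural order C^{d a} (x) C^{d b}, placed into C^{d1}(x)C^{d2}(x)C^{d3}.\<close>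
definition embed_prod :: "(nat \<Rightarrow> nat) \<Rightarrow> nat \<Rightarrow> nat \<Rightarrow> nat \<Rightarrow> complex mat \<Rightarrow> complex mat \<Rightarrow> complex mat" where
  "embed_prod d f g h \<sigma> \<tau> = (let a = min g h; b = max g h in
     mat (totdim d) (totdim d) (\<lambda>(i, j).
       \<sigma> $$ (coord d i f, coord d j f) *
       \<tau> $$ (coord d i a * d b + coord d i b, coord d j a * d b + coord d j b)))"

definition separable_bip :: "(nat \<Rightarrow> nat) \<Rightarrow> nat \<Rightarrow> nat \<Rightarrow> nat \<Rightarrow> complex mat \<Rightarrow> bool" where
  "separable_bip d f g h \<rho> \<longleftrightarrow>
     (\<exists>(n :: nat) (p :: nat \<Rightarrow> real) (\<sigma> :: nat \<Rightarrow> complex mat) (\<tau> :: nat \<Rightarrow> complex mat).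
        (\<forall>s<n. p s > 0 \<and> density (d f) (\<sigma> s) \<and> density (d g * d h) (\<tau> s)) \<and>
        (\<Sum>s<n. p s) = 1 \<and>
        \<rho> = mat (totdim d) (totdim d) (\<lambda>(i, j).
               \<Sum>s<n. complex_of_real (p s) * embed_prod d f g h (\<sigma> s) (\<tau> s) $$ (i, j)))"

end

theory Submission
  imports Defs "Jordan_Normal_Form.Schur_Decomposition"
begin

lemma trace_mult_comm:
  fixes A B :: "complex mat"
  assumes "A \<in> carrier_mat n m" "B \<in> carrier_mat m n"
  shows "(\<Sum>i<n. (A * B) $$ (i,i)) = (\<Sum>i<m. (B * A) $$ (i,i))"
proof -
  have "(\<Sum>i<n. (A * B) $$ (i,i)) = (\<Sum>i<n. \<Sum>j<m. A $$ (i,j) * B $$ (j,i))"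
    using assms by (auto simp: index_mult_mat scalar_prod_def atLeast0LessThan intro!: sum.cong)
  also have "\<dots> = (\<Sum>j<m. \<Sum>i<n. B $$ (j,i) * A $$ (i,j))"
    by (subst sum.swap) (simp add: mult.commute)
  also have "\<dots> = (\<Sum>i<m. (B * A) $$ (i,i))"
    using assms by (auto simp: index_mult_mat scalar_prod_def atLeast0LessThan intro!: sum.cong)
  finally show ?thesis .
qed

lemma trace_similar:
  fixes A B :: "complex mat"
  assumes "similar_mat_wit A B P Q" "A \<in> carrier_mat n n"
  shows "(\<Sum>i<n. A $$ (i,i)) = (\<Sum>i<n. B $$ (i,i))"
proof -
  from assms have c: "B \<in> carrier_mat n n" "P \<in> carrier_mat n n" "Q \<in> carrier_mat n n"
    and QP: "Q * P = 1\<^sub>m n" and A: "A = P * B * Q"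
    unfolding similar_mat_wit_def Let_def by auto
  have "(\<Sum>i<n. A $$ (i,i)) = (\<Sum>i<n. (P * (B * Q)) $$ (i,i))"
    using A c by (simp add: assoc_mult_mat[of P n n B n Q n])
  also have "\<dots> = (\<Sum>i<n. ((B * Q) * P) $$ (i,i))"
    by (rule trace_mult_comm) (use c in auto)
  also have "(B * Q) * P = B"
    using c QP by (simp add: assoc_mult_mat[of B n n Q n P n])
  finally show ?thesis .
qed

lemma trace_sum_roots:
  fixes A :: "complex mat"
  assumes A: "A \<in> carrier_mat n n" and cp: "char_poly A = (\<Prod>a\<leftarrow>as. [:- a, 1:])"
  shows "(\<Sum>i<n. A $$ (i,i)) = sum_list as"
proof -
  obtain B P Q where s: "schur_decomposition A as = (B,P,Q)" by (cases "schur_decomposition A as") auto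
  from schur_decomposition[OF A cp s] have sim: "similar_mat_wit A B P Q" and d: "diag_mat B = as" by auto
  from sim A have B: "B \<in> carrier_mat n n" unfolding similar_mat_wit_def Let_def by auto
  have "sum_list as = (\<Sum>i<n. B $$ (i,i))"
    unfolding d[symmetric] diag_mat_def using B by (simp add: sum_list_map_eq_sum_count2 atLeast0LessThan sum_list_sum_nth)
  with trace_similar[OF sim A] show ?thesis by simp
qed

definition ip :: "nat \<Rightarrow> (nat \<Rightarrow> complex) \<Rightarrow> (nat \<Rightarrow> complex) \<Rightarrow> complex" where
  "ip n x y = (\<Sum>i<n. x i * cnj (y i))"

definition mvf :: "nat \<Rightarrow> complex mat \<Rightarrow> (nat \<Rightarrow> complex) \<Rightarrow> nat \<Rightarrow> complex" where
  "mvf n A x i = (\<Sum>j<n. A $$ (i,j) * x j)"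

definition herm :: "nat \<Rightarrow> complex mat \<Rightarrow> bool" where
  "herm n A \<longleftrightarrow> A \<in> carrier_mat n n \<and> (\<forall>i<n. \<forall>j<n. A $$ (i,j) = cnj (A $$ (j,i)))"

lemma ip_cong: "(\<And>i. i < n \<Longrightarrow> x i = x' i) \<Longrightarrow> (\<And>i. i < n \<Longrightarrow> y i = y' i) \<Longrightarrow> ip n x y = ip n x' y'"
  unfolding ip_def by (auto intro!: sum.cong)

lemma ip_add_left: "ip n (\<lambda>i. x i + y i) z = ip n x z + ip n y z"
  unfolding ip_def by (simp add: distrib_right sum.distrib)

lemma ip_diff_left: "ip n (\<lambda>i. x i - y i) z = ip n x z - ip n y z"
  unfolding ip_def by (simp add: left_diff_distrib sum_subtractf)

lemma ip_scale_left: "ip n (\<lambda>i. c * x i) z = c * ip n x z"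
  unfolding ip_def by (simp add: sum_distrib_left mult.assoc)

lemma ip_scale_right: "ip n x (\<lambda>i. c * z i) = cnj c * ip n x z"
  unfolding ip_def by (simp add: sum_distrib_left algebra_simps)

lemma ip_sum_left: "ip n (\<lambda>i. \<Sum>a\<in>S. f a i) z = (\<Sum>a\<in>S. ip n (f a) z)"
  unfolding ip_def by (simp add: sum_distrib_right) (rule sum.swap)

lemma ip_conj: "cnj (ip n x y) = ip n y x"
  unfolding ip_def by (simp add: mult.commute)

lemma ip_self: "ip n x x = of_real (\<Sum>i<n. (cmod (x i))\<^sup>2)"
  unfolding ip_def by (simp add: complex_norm_square[symmetric])

lemma ip_self_real: "Re (ip n x x) = (\<Sum>i<n. (cmod (x i))\<^sup>2)" "Im (ip n x x) = 0"
  by (simp_all add: ip_self)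

lemma ip_self_nonneg: "0 \<le> Re (ip n x x)"
  by (simp add: ip_self_real sum_nonneg)

lemma ip_self_zero: "ip n x x = 0 \<Longrightarrow> i < n \<Longrightarrow> x i = 0"
proof -
  assume "ip n x x = 0" "i < n"
  hence "(\<Sum>i<n. (cmod (x i))\<^sup>2) = 0" using ip_self_real(1)[of n x] by simp
  hence "\<forall>j\<in>{..<n}. (cmod (x j))\<^sup>2 = 0" by (subst sum_nonneg_eq_0_iff[symmetric]) auto
  with \<open>i < n\<close> show "x i = 0" by auto
qed

lemma herm_ip:
  assumes "herm n A"
  shows "ip n (mvf n A x) y = ip n x (mvf n A y)"
proof -
  have h: "\<And>i j. i < n \<Longrightarrow> j < n \<Longrightarrow> cnj (A $$ (j,i)) = A $$ (i,j)"
    using assms unfolding herm_def by (metis complex_cnj_cnj)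
  have "ip n (mvf n A x) y = (\<Sum>i<n. \<Sum>j<n. A $$ (i,j) * x j * cnj (y i))"
    unfolding ip_def mvf_def by (simp add: sum_distrib_right)
  also have "\<dots> = (\<Sum>j<n. \<Sum>i<n. A $$ (i,j) * x j * cnj (y i))"
    by (rule sum.swap)
  also have "\<dots> = (\<Sum>j<n. \<Sum>i<n. x j * cnj (A $$ (j,i) * y i))"
    by (rule sum.cong[OF refl], rule sum.cong[OF refl]) (simp add: h)
  also have "\<dots> = ip n x (mvf n A y)"
    unfolding ip_def mvf_def by (simp add: sum_distrib_left)
  finally show ?thesis .
qed

lemma mvf_mult:
  assumes "X \<in> carrier_mat n n" "Y \<in> carrier_mat n n" "i < n"
  shows "mvf n (X * Y) x i = mvf n X (mvf n Y x) i"
proof -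
  have "mvf n (X * Y) x i = (\<Sum>j<n. (\<Sum>l<n. X $$ (i,l) * Y $$ (l,j)) * x j)"
    unfolding mvf_def using assms by (auto intro!: sum.cong simp: scalar_prod_def atLeast0LessThan)
  also have "\<dots> = (\<Sum>l<n. X $$ (i,l) * (\<Sum>j<n. Y $$ (l,j) * x j))"
    by (simp add: sum_distrib_left sum_distrib_right mult.assoc) (rule sum.swap)
  finally show ?thesis unfolding mvf_def .
qed

lemma mvf_cong: "(\<And>i. i < n \<Longrightarrow> x i = x' i) \<Longrightarrow> mvf n A x j = mvf n A x' j"
  unfolding mvf_def by (auto intro!: sum.cong)

lemma mvf_vec:
  assumes "N \<in> carrier_mat n n" "v \<in> carrier_vec n" "i < n"
  shows "(N *\<^sub>v v) $ i = mvf n N (\<lambda>j. v $ j) i"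
  using assms by (auto simp: mvf_def scalar_prod_def atLeast0LessThan intro!: sum.cong)

lemma mvf_add:
  assumes "X \<in> carrier_mat n n" "Y \<in> carrier_mat n n" "i < n"
  shows "mvf n (X + Y) x i = mvf n X x i + mvf n Y x i"
  unfolding mvf_def using assms by (simp add: distrib_right sum.distrib)

lemma sum_delta_nat: "b < (k::nat) \<Longrightarrow> (\<Sum>a<k. c a * (if a = b then 1 else 0)) = (c b :: complex)"
proof -
  assume "b < k"
  have "(\<Sum>a<k. c a * (if a = b then 1 else 0)) = (\<Sum>a<k. if a = b then c a else 0)"
    by (intro sum.cong) auto
  also have "\<dots> = c b" using \<open>b < k\<close> by (subst sum.delta) auto
  finally show ?thesis .
qed

lemma deflate:
  fixes A :: "complex mat" and u :: "nat \<Rightarrow> nat \<Rightarrow> complex" and lam :: "nat \<Rightarrow> real"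
  assumes H: "herm n A" and kn: "k < n"
    and orth: "\<And>a b. a < k \<Longrightarrow> b < k \<Longrightarrow> ip n (u a) (u b) = (if a = b then 1 else 0)"
    and eig: "\<And>a i. a < k \<Longrightarrow> i < n \<Longrightarrow> mvf n A (u a) i = of_real (lam a) * u a i"
  shows "\<exists>v \<mu>. ip n v v = 1 \<and> (\<forall>a<k. ip n v (u a) = 0) \<and> (\<forall>i<n. mvf n A v i = of_real \<mu> * v i)"
proof -
  have A: "A \<in> carrier_mat n n" using H unfolding herm_def by auto
  define R where "R = mat n n (\<lambda>(i,j). (\<Sum>a<k. u a i * cnj (u a j)))"
  define Pm where "Pm = 1\<^sub>m n - R"
  define Qf where "Qf x = (\<lambda>i. \<Sum>a<k. ip n x (u a) * u a i)" for x
  have R: "R \<in> carrier_mat n n" unfolding R_def by auto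
  have Pm: "Pm \<in> carrier_mat n n" unfolding Pm_def using R by auto
  have R_mv: "mvf n R x i = Qf x i" if "i < n" for x i
  proof -
    have "mvf n R x i = (\<Sum>j<n. \<Sum>a<k. u a i * cnj (u a j) * x j)"
      unfolding mvf_def R_def using that by (simp add: sum_distrib_right)
    also have "\<dots> = (\<Sum>a<k. \<Sum>j<n. u a i * cnj (u a j) * x j)" by (rule sum.swap)
    also have "\<dots> = Qf x i" unfolding Qf_def ip_def
      by (simp add: sum_distrib_left sum_distrib_right mult_ac)
    finally show ?thesis .
  qed
  have one_mv: "mvf n (1\<^sub>m n) x i = x i" if "i < n" for x i
  proof -
    have "mvf n (1\<^sub>m n) x i = (\<Sum>j<n. (if i = j then 1 else 0) * x j)"
      unfolding mvf_def using that by (intro sum.cong) auto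
    also have "\<dots> = (\<Sum>j<n. if i = j then x j else 0)" by (intro sum.cong) auto
    also have "\<dots> = x i" using that by (subst sum.delta') auto
    finally show ?thesis .
  qed
  have Pm_mv: "mvf n Pm x i = x i - Qf x i" if "i < n" for x i
  proof -
    have "mvf n Pm x i = (\<Sum>j<n. (1\<^sub>m n $$ (i,j) - R $$ (i,j)) * x j)"
      unfolding mvf_def Pm_def using that R by (intro sum.cong) auto
    also have "\<dots> = mvf n (1\<^sub>m n) x i - mvf n R x i"
      unfolding mvf_def by (simp add: left_diff_distrib sum_subtractf)
    finally show ?thesis using one_mv R_mv that by simp
  qed
  have Qf_cong: "Qf x i = Qf y i" if "\<And>j. j < n \<Longrightarrow> x j = y j" for x y i
    unfolding Qf_def by (auto intro!: sum.cong ip_cong that)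
  have Qf_ip: "ip n (Qf x) (u b) = ip n x (u b)" if "b < k" for x b
  proof -
    have "ip n (Qf x) (u b) = (\<Sum>a<k. ip n x (u a) * ip n (u a) (u b))"
      unfolding Qf_def by (simp add: ip_sum_left ip_scale_left)
    also have "\<dots> = (\<Sum>a<k. ip n x (u a) * (if a = b then 1 else 0))"
      using orth that by (intro sum.cong) auto
    also have "\<dots> = ip n x (u b)" using sum_delta_nat[OF that] .
    finally show ?thesis .
  qed
  have Pf_ip: "ip n (\<lambda>i. y i - Qf y i) (u b) = 0" if "b < k" for y b
    using Qf_ip[OF that] by (simp add: ip_diff_left)
  have trR: "(\<Sum>i<n. R $$ (i,i)) = of_nat k"
  proof -
    have "(\<Sum>i<n. R $$ (i,i)) = (\<Sum>a<k. ip n (u a) (u a))"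
      unfolding R_def ip_def by (simp add: sum.swap[of _ "{..<n}"])
    also have "\<dots> = (\<Sum>a<k. 1)" using orth by (intro sum.cong) auto
    finally show ?thesis by simp
  qed
  define N where "N t = Pm * A * Pm + t \<cdot>\<^sub>m R" for t :: complex
  have N: "N t \<in> carrier_mat n n" for t unfolding N_def using Pm A R by auto
  define c where "c = (\<Sum>i<n. (Pm * A * Pm) $$ (i,i))"
  have trN: "(\<Sum>i<n. N t $$ (i,i)) = c + t * of_nat k" for t
  proof -
    have "(\<Sum>i<n. N t $$ (i,i)) = (\<Sum>i<n. (Pm * A * Pm) $$ (i,i) + t * R $$ (i,i))"
      unfolding N_def using Pm A R by (intro sum.cong) auto
    also have "\<dots> = c + t * of_nat k" unfolding c_def
      by (simp add: sum.distrib sum_distrib_left[symmetric] trR)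
    finally show ?thesis .
  qed
  define t :: complex where "t = (if c = 0 then 1 else 0)"
  have tne: "c + t * of_nat k \<noteq> of_nat n * t"
    using kn unfolding t_def by auto
  obtain as where cp: "char_poly (N t) = (\<Prod>a\<leftarrow>as. [:- a, 1:])" and las: "length as = n"
    using char_poly_factorized[OF N] by blast
  have "\<exists>\<mu>. poly (char_poly (N t)) \<mu> = 0 \<and> \<mu> \<noteq> t"
  proof (rule ccontr)
    assume "\<not> ?thesis"
    hence all: "\<And>a. a \<in> set as \<Longrightarrow> a = t" using linear_poly_root cp by metis
    hence "as = replicate n t" using las by (metis replicate_length_same)
    hence "sum_list as = of_nat n * t" by (simp add: sum_list_replicate)
    with trace_sum_roots[OF N cp] trN[of t] tne show False by simp
  qed
  then obtain \<mu> where root: "poly (char_poly (N t)) \<mu> = 0" and mut: "\<mu> \<noteq> t" by blast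
  have ev: "eigenvalue (N t) \<mu>" using root eigenvalue_root_char_poly[OF N] by simp
  define v where "v = find_eigenvector (N t) \<mu>"
  have "eigenvector (N t) v \<mu>" unfolding v_def by (rule find_eigenvector[OF N ev])
  moreover have "dim_row (N t) = n" using N[of t] by simp
  ultimately have v: "v \<in> carrier_vec n" and v0: "v \<noteq> 0\<^sub>v n" and ve: "N t *\<^sub>v v = \<mu> \<cdot>\<^sub>v v"
    unfolding eigenvector_def by auto
  define x where "x = (\<lambda>i. v $ i)"
  have xe: "mvf n (N t) x i = \<mu> * x i" if "i < n" for i
    using mvf_vec[OF N v that, symmetric] ve v that unfolding x_def by simp
  have x0: "\<exists>i<n. x i \<noteq> 0"
  proof (rule ccontr)
    assume "\<not> ?thesis"
    hence "v = 0\<^sub>v n" using v unfolding x_def by (intro eq_vecI) auto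
    with v0 show False by simp
  qed
  define y where "y = (\<lambda>j. x j - Qf x j)"
  define z where "z = mvf n A y"
  have star: "z i - Qf z i + t * Qf x i = \<mu> * x i" if "i < n" for i
  proof -
    have "mvf n (N t) x i = mvf n (Pm * A * Pm) x i + mvf n (t \<cdot>\<^sub>m R) x i"
      unfolding N_def using Pm A R that by (intro mvf_add) auto
    also have "mvf n (Pm * A * Pm) x i = mvf n Pm (mvf n A (mvf n Pm x)) i"
      using Pm A that mvf_mult[of "Pm * A" n Pm i x] mvf_mult[of Pm n A i "mvf n Pm x"] by simp
    also have "\<dots> = mvf n Pm z i"
      unfolding z_def y_def by (rule mvf_cong, rule mvf_cong) (simp add: Pm_mv)
    also have "\<dots> = z i - Qf z i" using Pm_mv that by simp
    also have "mvf n (t \<cdot>\<^sub>m R) x i = t * mvf n R x i"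
      unfolding mvf_def using R that by (simp add: sum_distrib_left mult.assoc)
    finally show ?thesis using xe that R_mv by simp
  qed
  have xu: "ip n x (u b) = 0" if "b < k" for b
  proof -
    have "ip n (\<lambda>i. z i - Qf z i + t * Qf x i) (u b) = ip n (\<lambda>i. \<mu> * x i) (u b)"
      using star by (intro ip_cong) auto
    hence "t * ip n x (u b) = \<mu> * ip n x (u b)"
      using Pf_ip[OF that, of z] Qf_ip[OF that, of x]
      by (simp add: ip_add_left ip_scale_left)
    with mut show ?thesis by (metis mult_cancel_right)
  qed
  have Qx: "Qf x i = 0" for i unfolding Qf_def using xu by simp
  have zA: "z i = mvf n A x i" for i unfolding z_def y_def Qx by simp
  have zu: "ip n z (u b) = 0" if "b < k" for b
  proof -
    have "ip n z (u b) = ip n (mvf n A x) (u b)" by (intro ip_cong) (simp_all add: zA)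
    also have "\<dots> = ip n x (mvf n A (u b))" using herm_ip[OF H] .
    also have "\<dots> = ip n x (\<lambda>i. of_real (lam b) * u b i)" using eig[OF that] by (intro ip_cong) auto
    also have "\<dots> = 0" using xu[OF that] by (simp add: ip_scale_right)
    finally show ?thesis .
  qed
  have Qz: "Qf z i = 0" for i unfolding Qf_def using zu by simp
  have Ax: "mvf n A x i = \<mu> * x i" if "i < n" for i
    using star[OF that] Qz Qx zA by simp
  have xx: "ip n x x \<noteq> 0" using x0 ip_self_zero by blast
  have e1: "ip n (mvf n A x) x = ip n (\<lambda>i. \<mu> * x i) x" by (rule ip_cong) (simp_all add: Ax)
  have e2: "ip n x (mvf n A x) = ip n x (\<lambda>i. \<mu> * x i)" by (rule ip_cong) (simp_all add: Ax)
  have "\<mu> * ip n x x = cnj \<mu> * ip n x x"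
    using herm_ip[OF H, of x x] e1 e2 unfolding ip_scale_left ip_scale_right by simp
  with xx have "\<mu> = cnj \<mu>" by simp
  hence "Im \<mu> = Im (cnj \<mu>)" by (rule arg_cong)
  hence "Im \<mu> = 0" by simp
  hence mur: "\<mu> = of_real (Re \<mu>)" by (simp add: complex_eq_iff)
  define s where "s = sqrt (Re (ip n x x))"
  have "Re (ip n x x) > 0"
  proof -
    have "ip n x x = of_real (Re (ip n x x))" using ip_self_real(2)[of n x] by (simp add: complex_eq_iff)
    hence "Re (ip n x x) \<noteq> 0" using xx by (metis of_real_0)
    with ip_self_nonneg[of n x] show ?thesis by linarith
  qed
  hence s0: "s > 0" unfolding s_def by simp
  have ss: "of_real s * of_real s = ip n x x"
  proof -
    have "of_real s * of_real s = (of_real (Re (ip n x x)) :: complex)"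
      using \<open>Re (ip n x x) > 0\<close> unfolding s_def by (simp flip: of_real_mult)
    thus ?thesis using ip_self_real(2)[of n x] by (simp add: complex_eq_iff)
  qed
  define v' where "v' = (\<lambda>i. x i / of_real s)"
  have v'1: "ip n v' v' = 1"
  proof -
    have "ip n v' v' = (\<Sum>i<n. x i * cnj (x i) / (of_real s * of_real s))"
      unfolding v'_def ip_def by (intro sum.cong) auto
    also have "\<dots> = ip n x x / (of_real s * of_real s)"
      unfolding ip_def by (rule sum_divide_distrib[symmetric])
    finally show ?thesis using ss xx by simp
  qed
  moreover have "\<forall>a<k. ip n v' (u a) = 0"
  proof (intro allI impI)
    fix a assume "a < k"
    have "ip n v' (u a) = (\<Sum>i<n. x i * cnj (u a i) / of_real s)"
      unfolding v'_def ip_def by (intro sum.cong) auto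
    also have "\<dots> = ip n x (u a) / of_real s"
      unfolding ip_def by (rule sum_divide_distrib[symmetric])
    finally show "ip n v' (u a) = 0" using xu[OF \<open>a < k\<close>] by simp
  qed
  moreover have "\<forall>i<n. mvf n A v' i = of_real (Re \<mu>) * v' i"
  proof (intro allI impI)
    fix i assume "i < n"
    have "mvf n A v' i = (\<Sum>j<n. A $$ (i,j) * x j / of_real s)"
      unfolding v'_def mvf_def by (intro sum.cong) auto
    also have "\<dots> = mvf n A x i / of_real s"
      unfolding mvf_def by (rule sum_divide_distrib[symmetric])
    finally show "mvf n A v' i = of_real (Re \<mu>) * v' i"
      using Ax[OF \<open>i < n\<close>] mur unfolding v'_def by simp
  qed
  ultimately show ?thesis by blast
qed

lemma orth_eig_family:
  assumes H: "herm n A"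
  shows "k \<le> n \<Longrightarrow> \<exists>u lam. (\<forall>a<k. \<forall>b<k. ip n (u a) (u b) = (if a = b then 1 else 0)) \<and>
     (\<forall>a<k. \<forall>i<n. mvf n A (u a) i = of_real (lam a) * u a i)"
proof (induction k)
  case 0
  show ?case by auto
next
  case (Suc k)
  then obtain u lam where o: "\<forall>a<k. \<forall>b<k. ip n (u a) (u b) = (if a = b then 1 else 0)"
    and e: "\<forall>a<k. \<forall>i<n. mvf n A (u a) i = of_real (lam a) * u a i" by auto
  from Suc have kn: "k < n" by simp
  obtain v \<mu> where v1: "ip n v v = 1" and vo: "\<forall>a<k. ip n v (u a) = 0"
    and ve: "\<forall>i<n. mvf n A v i = of_real \<mu> * v i"
    using deflate[OF H kn, of u lam] o e by blast
  have vo': "\<forall>a<k. ip n (u a) v = 0" using vo ip_conj by (metis complex_cnj_zero)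
  define u' where "u' = u(k := v)"
  define lam' where "lam' = lam(k := \<mu>)"
  have "\<forall>a<Suc k. \<forall>b<Suc k. ip n (u' a) (u' b) = (if a = b then 1 else 0)"
    unfolding u'_def using o vo vo' v1 by (auto simp: less_Suc_eq)
  moreover have "\<forall>a<Suc k. \<forall>i<n. mvf n A (u' a) i = of_real (lam' a) * u' a i"
    unfolding u'_def lam'_def using e ve by (auto simp: less_Suc_eq)
  ultimately show ?case by blast
qed

lemma sum_if_eq_nat: "j < (n::nat) \<Longrightarrow> (\<Sum>l<n. f l * (if l = j then 1 else 0)) = (f j :: complex)"
proof -
  assume "j < n"
  have "(\<Sum>l<n. f l * (if l = j then 1 else 0)) = (\<Sum>l<n. if l = j then f l else 0)"
    by (intro sum.cong) auto
  also have "\<dots> = f j" using \<open>j < n\<close> by (subst sum.delta) auto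
  finally show ?thesis .
qed

theorem spectral:
  assumes H: "herm n A"
  shows "\<exists>u lam. (\<forall>a<n. \<forall>b<n. ip n (u a) (u b) = (if a = b then 1 else 0)) \<and>
     (\<forall>a<n. \<forall>i<n. mvf n A (u a) i = of_real (lam a) * u a i) \<and>
     (\<forall>i<n. \<forall>j<n. (\<Sum>k<n. u k i * cnj (u k j)) = (if i = j then 1 else 0)) \<and>
     (\<forall>i<n. \<forall>j<n. A $$ (i,j) = (\<Sum>k<n. of_real (lam k) * u k i * cnj (u k j))) \<and>
     char_poly A = (\<Prod>k\<leftarrow>[0..<n]. [:- of_real (lam k), 1:])"
proof -
  obtain u lam where o: "\<forall>a<n. \<forall>b<n. ip n (u a) (u b) = (if a = b then 1 else 0)"
    and e: "\<forall>a<n. \<forall>i<n. mvf n A (u a) i = of_real (lam a) * u a i"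
    using orth_eig_family[OF H, of n] by auto
  have A: "A \<in> carrier_mat n n" using H unfolding herm_def by auto
  define U where "U = mat n n (\<lambda>(i,k). u k i)"
  have U: "U \<in> carrier_mat n n" unfolding U_def by auto
  have aU: "adj U \<in> carrier_mat n n" unfolding U_def adj_def by auto
  have aUU: "adj U * U = 1\<^sub>m n"
  proof (rule eq_matI)
    fix a b assume ab: "a < dim_row (1\<^sub>m n)" "b < dim_col (1\<^sub>m n)"
    have "(adj U * U) $$ (a,b) = (\<Sum>i<n. cnj (u a i) * u b i)"
      using ab U aU unfolding U_def adj_def
      by (auto simp: scalar_prod_def atLeast0LessThan intro!: sum.cong)
    also have "\<dots> = ip n (u b) (u a)" unfolding ip_def by (simp add: mult.commute)
    also have "\<dots> = 1\<^sub>m n $$ (a,b)" using o ab by auto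
    finally show "(adj U * U) $$ (a,b) = 1\<^sub>m n $$ (a,b)" .
  qed (use U aU in auto)
  have UaU: "U * adj U = 1\<^sub>m n" using mat_mult_left_right_inverse[OF aU U aUU] .
  have compl: "\<forall>i<n. \<forall>j<n. (\<Sum>k<n. u k i * cnj (u k j)) = (if i = j then 1 else 0)"
  proof (intro allI impI)
    fix i j assume ij: "i < n" "j < n"
    have "(U * adj U) $$ (i,j) = (\<Sum>k<n. u k i * cnj (u k j))"
      using ij U aU unfolding U_def adj_def
      by (auto simp: scalar_prod_def atLeast0LessThan intro!: sum.cong)
    thus "(\<Sum>k<n. u k i * cnj (u k j)) = (if i = j then 1 else 0)" using UaU ij by simp
  qed
  have Aexp: "\<forall>i<n. \<forall>j<n. A $$ (i,j) = (\<Sum>k<n. of_real (lam k) * u k i * cnj (u k j))"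
  proof (intro allI impI)
    fix i j assume ij: "i < n" "j < n"
    have "A $$ (i,j) = (\<Sum>l<n. A $$ (i,l) * (if l = j then 1 else 0))"
      using sum_if_eq_nat[OF ij(2)] by simp
    also have "\<dots> = (\<Sum>l<n. A $$ (i,l) * (\<Sum>k<n. u k l * cnj (u k j)))"
      using compl ij by (intro sum.cong) auto
    also have "\<dots> = (\<Sum>k<n. (\<Sum>l<n. A $$ (i,l) * u k l) * cnj (u k j))"
      by (simp add: sum_distrib_left sum_distrib_right mult.assoc) (rule sum.swap)
    also have "\<dots> = (\<Sum>k<n. of_real (lam k) * u k i * cnj (u k j))"
      using e ij unfolding mvf_def by (intro sum.cong) auto
    finally show "A $$ (i,j) = (\<Sum>k<n. of_real (lam k) * u k i * cnj (u k j))" .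
  qed
  define D where "D = mat n n (\<lambda>(i,j). if i = j then (of_real (lam i) :: complex) else 0)"
  have D: "D \<in> carrier_mat n n" unfolding D_def by auto
  have AU: "A * U = U * D"
  proof (rule eq_matI)
    fix i k assume ik: "i < dim_row (U * D)" "k < dim_col (U * D)"
    hence ik': "i < n" "k < n" using U D by auto
    have "(A * U) $$ (i,k) = mvf n A (u k) i"
      using ik' A U unfolding U_def mvf_def
      by (auto simp: scalar_prod_def atLeast0LessThan intro!: sum.cong)
    also have "\<dots> = of_real (lam k) * u k i" using e ik' by auto
    also have "\<dots> = (\<Sum>l<n. u l i * (if l = k then of_real (lam l) else 0))"
    proof -
      have "(\<Sum>l<n. u l i * (if l = k then of_real (lam l) else 0)) = (\<Sum>l<n. if l = k then u l i * of_real (lam l) else 0)"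
        by (intro sum.cong) auto
      also have "\<dots> = u k i * of_real (lam k)" using ik' by (subst sum.delta) auto
      finally show ?thesis by simp
    qed
    also have "\<dots> = (U * D) $$ (i,k)"
      using ik' U D unfolding U_def D_def
      by (auto simp: scalar_prod_def atLeast0LessThan intro!: sum.cong)
    finally show "(A * U) $$ (i,k) = (U * D) $$ (i,k)" .
  qed (use A U D in auto)
  have "A = A * (U * adj U)" using UaU A by simp
  also have "\<dots> = (A * U) * adj U" using A U aU by (simp add: assoc_mult_mat)
  also have "\<dots> = U * D * adj U" unfolding AU ..
  finally have AUDU: "A = U * D * adj U" .
  have "similar_mat_wit A D U (adj U)"
    unfolding similar_mat_wit_def Let_def using A D U aU UaU aUU AUDU by auto
  hence "char_poly A = char_poly D" using char_poly_similar unfolding similar_mat_def by blast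
  also have "char_poly D = (\<Prod>a\<leftarrow>diag_mat D. [:- a, 1:])"
    by (rule char_poly_upper_triangular[OF D]) (auto simp: upper_triangular_def D_def)
  also have "diag_mat D = map (\<lambda>k. of_real (lam k)) [0..<n]"
    unfolding diag_mat_def D_def by auto
  finally have "char_poly A = (\<Prod>k\<leftarrow>[0..<n]. [:- of_real (lam k), 1:])" by (simp add: o_def)
  with o e compl Aexp show ?thesis by blast
qed

lemma roots_sum_gen:
  fixes es :: "complex list"
  shows "finite S \<Longrightarrow> set es \<subseteq> S \<Longrightarrow>
    (\<Sum>z\<in>S. real (Polynomial.order z (\<Prod>a\<leftarrow>es. [:- a, 1:])) * f z) = sum_list (map f es)"
proof (induction es)
  case Nil
  then show ?case by simp
next
  case (Cons e es)
  have ne: "(\<Prod>a\<leftarrow>es. [:- a, 1:]) \<noteq> 0"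
    by (auto simp: prod_list_zero_iff)
  have ne1: "[:- e, 1:] \<noteq> 0" by simp
  have ne2: "[:- e, 1:] * (\<Prod>a\<leftarrow>es. [:- a, 1:]) \<noteq> 0" using ne ne1 no_zero_divisors by blast
  have "(\<Sum>z\<in>S. real (Polynomial.order z (\<Prod>a\<leftarrow>e # es. [:- a, 1:])) * f z)
      = (\<Sum>z\<in>S. (if z = e then f z else 0) + real (Polynomial.order z (\<Prod>a\<leftarrow>es. [:- a, 1:])) * f z)"
  proof (intro sum.cong refl)
    fix z
    have "Polynomial.order z (\<Prod>a\<leftarrow>e # es. [:- a, 1:]) = Polynomial.order z [:- e, 1:] + Polynomial.order z (\<Prod>a\<leftarrow>es. [:- a, 1:])"
      using order_mult[OF ne2] by simp
    also have "Polynomial.order z [:- e, 1:] = (if z = e then 1 else 0)" by (auto simp: order_linear')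
    finally show "real (Polynomial.order z (\<Prod>a\<leftarrow>e # es. [:- a, 1:])) * f z
       = (if z = e then f z else 0) + real (Polynomial.order z (\<Prod>a\<leftarrow>es. [:- a, 1:])) * f z"
      by (auto simp: distrib_right)
  qed
  also have "\<dots> = f e + sum_list (map f es)"
    using Cons by (simp add: sum.distrib)
  finally show ?case by simp
qed

lemma roots_sum:
  fixes es :: "complex list"
  shows "(\<Sum>z\<in>{z. poly (\<Prod>a\<leftarrow>es. [:- a, 1:]) z = 0}. real (Polynomial.order z (\<Prod>a\<leftarrow>es. [:- a, 1:])) * f z)
     = sum_list (map f es)"
proof -
  have "{z. poly (\<Prod>a\<leftarrow>es. [:- a, 1:]) z = 0} = set es"
    by (auto simp: poly_prod_list_zero_iff)
  thus ?thesis using roots_sum_gen[of "set es" es f] by simp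
qed

lemma cs_real:
  fixes a b :: "nat \<Rightarrow> real"
  shows "(\<Sum>i\<in>I. a i * b i)\<^sup>2 \<le> (\<Sum>i\<in>I. (a i)\<^sup>2) * (\<Sum>i\<in>I. (b i)\<^sup>2)"
proof (cases "(\<Sum>i\<in>I. (b i)\<^sup>2) > 0")
  case False
  then consider "\<And>i. i\<in>I \<Longrightarrow> b i = 0" | "infinite I"
    by (metis (mono_tags, lifting) sum_pos2 zero_le_power2 zero_less_power2)
  thus ?thesis
    by fastforce
next
  case True
  define r where "r \<equiv> (\<Sum>i\<in>I. a i * b i) / (\<Sum>i\<in>I. (b i)\<^sup>2)"
  have "0 \<le> (\<Sum>i\<in>I. (a i - r * b i)\<^sup>2)"
    by (simp add: sum_nonneg)
  also have "... = (\<Sum>i\<in>I. (a i)\<^sup>2) - 2 * r * (\<Sum>i\<in>I. a i * b i) + r\<^sup>2 * (\<Sum>i\<in>I. (b i)\<^sup>2)"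
  proof -
    have "(\<Sum>i\<in>I. (a i - r * b i)\<^sup>2) = (\<Sum>i\<in>I. ((a i)\<^sup>2 - 2 * r * (a i * b i)) + r\<^sup>2 * (b i)\<^sup>2)"
      by (intro sum.cong refl) (simp add: power2_eq_square algebra_simps)
    also have "\<dots> = (\<Sum>i\<in>I. (a i)\<^sup>2) - 2 * r * (\<Sum>i\<in>I. a i * b i) + r\<^sup>2 * (\<Sum>i\<in>I. (b i)\<^sup>2)"
      by (simp only: sum.distrib sum_subtractf sum_distrib_left)
    finally show ?thesis .
  qed
  also have "\<dots> = (\<Sum>i\<in>I. (a i)\<^sup>2) - ((\<Sum>i\<in>I. a i * b i))\<^sup>2 / (\<Sum>i\<in>I. (b i)\<^sup>2)"
    using True by (simp add: r_def power2_eq_square field_simps)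
  finally have "0 \<le> (\<Sum>i\<in>I. (a i)\<^sup>2) - ((\<Sum>i\<in>I. a i * b i))\<^sup>2 / (\<Sum>i\<in>I. (b i)\<^sup>2)" .
  hence "((\<Sum>i\<in>I. a i * b i))\<^sup>2 / (\<Sum>i\<in>I. (b i)\<^sup>2) \<le> (\<Sum>i\<in>I. (a i)\<^sup>2)"
    by (simp add: le_diff_eq)
  thus "((\<Sum>i\<in>I. a i * b i))\<^sup>2 \<le> (\<Sum>i\<in>I. (a i)\<^sup>2) * (\<Sum>i\<in>I. (b i)\<^sup>2)"
    by (simp add: pos_divide_le_eq True)
qed

lemma cs_sqrt:
  fixes a b :: "nat \<Rightarrow> real"
  shows "(\<Sum>i\<in>S. a i * b i) \<le> sqrt (\<Sum>i\<in>S. (a i)\<^sup>2) * sqrt (\<Sum>i\<in>S. (b i)\<^sup>2)"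
proof -
  have "(\<Sum>i\<in>S. a i * b i) \<le> sqrt ((\<Sum>i\<in>S. a i * b i)\<^sup>2)" by simp
  also have "\<dots> \<le> sqrt ((\<Sum>i\<in>S. (a i)\<^sup>2) * (\<Sum>i\<in>S. (b i)\<^sup>2))"
    using cs_real real_sqrt_le_mono by blast
  finally show ?thesis by (simp add: real_sqrt_mult)
qed

lemma ip_diff_right: "ip n x (\<lambda>i. y i - z i) = ip n x y - ip n x z"
  unfolding ip_def by (simp add: right_diff_distrib sum_subtractf)

lemma ip_sum_right: "ip n z (\<lambda>i. \<Sum>a\<in>S. f a i) = (\<Sum>a\<in>S. ip n z (f a))"
  using arg_cong[OF ip_sum_left[of n f S z], of cnj] by (simp add: ip_conj)

lemma norm_ip_sq: "(cmod (ip n x y))\<^sup>2 = Re (ip n x y * ip n y x)"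
proof -
  have "ip n y x = cnj (ip n x y)" by (simp add: ip_conj)
  thus ?thesis by (simp add: complex_norm_square[symmetric])
qed

lemma bessel:
  fixes e :: "nat \<Rightarrow> nat \<Rightarrow> complex"
  assumes o1: "\<And>a b. a < K \<Longrightarrow> b < K \<Longrightarrow> a \<noteq> b \<Longrightarrow> ip m (e a) (e b) = 0"
    and o2: "\<And>a. a < K \<Longrightarrow> ip m (e a) (e a) = 0 \<or> ip m (e a) (e a) = 1"
  shows "(\<Sum>a<K. (cmod (ip m y (e a)))\<^sup>2) \<le> (\<Sum>l<m. (cmod (y l))\<^sup>2)"
proof -
  define c where "c a = ip m y (e a)" for a
  define S where "S = (\<lambda>l. \<Sum>a<K. c a * e a l)"
  have cz: "c a = 0" if "a < K" "ip m (e a) (e a) = 0" for a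
  proof -
    have "\<forall>l<m. e a l = 0" using ip_self_zero that(2) by blast
    hence "ip m y (e a) = ip m y (\<lambda>l. 0)" by (intro ip_cong) auto
    thus ?thesis unfolding c_def by (simp add: ip_def)
  qed
  have Sy: "ip m S y = (\<Sum>a<K. c a * cnj (c a))"
  proof -
    have "ip m S y = (\<Sum>a<K. c a * ip m (e a) y)" unfolding S_def by (simp add: ip_sum_left ip_scale_left)
    also have "\<dots> = (\<Sum>a<K. c a * cnj (c a))" unfolding c_def by (simp add: ip_conj[of m y, symmetric])
    finally show ?thesis .
  qed
  have yS: "ip m y S = (\<Sum>a<K. c a * cnj (c a))"
  proof -
    have "ip m y S = cnj (ip m S y)" by (simp add: ip_conj)
    also have "\<dots> = (\<Sum>a<K. c a * cnj (c a))" unfolding Sy by (simp add: mult.commute)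
    finally show ?thesis .
  qed
  have SS: "ip m S S = (\<Sum>a<K. c a * cnj (c a))"
  proof -
    have "ip m S S = (\<Sum>a<K. c a * (\<Sum>b<K. cnj (c b) * ip m (e a) (e b)))"
      unfolding S_def by (simp add: ip_sum_left ip_scale_left ip_sum_right ip_scale_right)
    also have "\<dots> = (\<Sum>a<K. c a * (cnj (c a) * ip m (e a) (e a)))"
    proof (intro sum.cong refl)
      fix a assume a: "a \<in> {..<K}"
      have "(\<Sum>b<K. cnj (c b) * ip m (e a) (e b)) = (\<Sum>b<K. if b = a then cnj (c b) * ip m (e a) (e b) else 0)"
        using o1 a by (intro sum.cong) auto
      also have "\<dots> = cnj (c a) * ip m (e a) (e a)" using a by (subst sum.delta) auto
      finally show "c a * (\<Sum>b<K. cnj (c b) * ip m (e a) (e b)) = c a * (cnj (c a) * ip m (e a) (e a))" by simp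
    qed
    also have "\<dots> = (\<Sum>a<K. c a * cnj (c a))"
    proof (intro sum.cong refl)
      fix a assume a: "a \<in> {..<K}"
      show "c a * (cnj (c a) * ip m (e a) (e a)) = c a * cnj (c a)"
        using o2[of a] cz[of a] a by auto
    qed
    finally show ?thesis .
  qed
  define r where "r = (\<lambda>l. y l - S l)"
  have "ip m r r = ip m y y - ip m y S - (ip m S y - ip m S S)"
    unfolding r_def by (simp add: ip_diff_left ip_diff_right)
  also have "\<dots> = ip m y y - (\<Sum>a<K. c a * cnj (c a))" using Sy yS SS by simp
  finally have "Re (ip m r r) = Re (ip m y y) - (\<Sum>a<K. (cmod (c a))\<^sup>2)"
    by (simp add: complex_norm_square[symmetric])
  moreover have "0 \<le> Re (ip m r r)" by (rule ip_self_nonneg)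
  ultimately show ?thesis unfolding c_def ip_self_real by simp
qed

lemma cmod_ip_sym: "cmod (ip n x y) = cmod (ip n y x)"
  by (metis complex_mod_cnj ip_conj)

lemma trace_norm_bound:
  fixes X :: "complex mat" and c :: "nat \<Rightarrow> real" and x z :: "nat \<Rightarrow> nat \<Rightarrow> complex"
  assumes X: "X \<in> carrier_mat n m"
    and Xe: "\<And>i j. i < n \<Longrightarrow> j < m \<Longrightarrow> X $$ (i,j) = (\<Sum>s<K. of_real (c s) * x s i * z s j)"
    and c: "\<And>s. s < K \<Longrightarrow> c s \<ge> 0"
  shows "trace_norm X \<le> (\<Sum>s<K. c s * sqrt (\<Sum>i<n. (cmod (x s i))\<^sup>2) * sqrt (\<Sum>j<m. (cmod (z s j))\<^sup>2))"
proof -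
  define M where "M = X * adj X"
  have aX: "adj X \<in> carrier_mat m n" using X unfolding adj_def by auto
  have M: "M \<in> carrier_mat n n" unfolding M_def using X aX by auto
  have Me: "M $$ (i,j) = (\<Sum>l<m. X $$ (i,l) * cnj (X $$ (j,l)))" if "i < n" "j < n" for i j
    unfolding M_def using X aX that
    by (auto simp: adj_def scalar_prod_def atLeast0LessThan intro!: sum.cong)
  have H: "herm n M" unfolding herm_def using M Me by (auto simp: mult.commute)
  obtain u lam where o: "\<forall>a<n. \<forall>b<n. ip n (u a) (u b) = (if a = b then 1 else 0)"
    and e: "\<forall>a<n. \<forall>i<n. mvf n M (u a) i = of_real (lam a) * u a i"
    and cp: "char_poly M = (\<Prod>k\<leftarrow>[0..<n]. [:- of_real (lam k), 1:])"
    using spectral[OF H] by blast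
  have tn: "trace_norm X = (\<Sum>k<n. sqrt (lam k))"
  proof -
    have cp': "char_poly M = (\<Prod>a\<leftarrow>map (\<lambda>k. complex_of_real (lam k)) [0..<n]. [:- a, 1:])"
      unfolding cp by (simp add: o_def)
    have "trace_norm X = sum_list (map (\<lambda>z. sqrt (Re z)) (map (\<lambda>k. complex_of_real (lam k)) [0..<n]))"
      unfolding trace_norm_def Let_def M_def[symmetric] cp' by (rule roots_sum)
    also have "\<dots> = (\<Sum>k<n. sqrt (lam k))"
      by (simp add: o_def sum_set_upt_conv_sum_list_nat[symmetric] atLeast0LessThan)
    finally show ?thesis .
  qed
  define w where "w k = (\<lambda>l. \<Sum>i<n. cnj (X $$ (i,l)) * u k i)" for k
  have Mmv: "mvf n M y i = (\<Sum>l<m. X $$ (i,l) * (\<Sum>j<n. cnj (X $$ (j,l)) * y j))" if "i < n" for y i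
  proof -
    have "mvf n M y i = (\<Sum>j<n. \<Sum>l<m. X $$ (i,l) * cnj (X $$ (j,l)) * y j)"
      unfolding mvf_def using Me that by (simp add: sum_distrib_right)
    also have "\<dots> = (\<Sum>l<m. \<Sum>j<n. X $$ (i,l) * (cnj (X $$ (j,l)) * y j))"
      by (subst sum.swap) (simp add: mult.assoc)
    also have "\<dots> = (\<Sum>l<m. X $$ (i,l) * (\<Sum>j<n. cnj (X $$ (j,l)) * y j))"
      by (simp add: sum_distrib_left)
    finally show ?thesis .
  qed
  have ipw: "ip m (w a) (w b) = (if a = b then of_real (lam a) else 0)" if "a < n" "b < n" for a b
  proof -
    have "ip n (mvf n M (u a)) (u b) = ip n (\<lambda>i. of_real (lam a) * u a i) (u b)"
      using e that by (intro ip_cong) auto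
    also have "\<dots> = (if a = b then of_real (lam a) else 0)"
      using o that by (simp add: ip_scale_left)
    finally have 1: "ip n (mvf n M (u a)) (u b) = (if a = b then of_real (lam a) else 0)" .
    have "ip n (mvf n M (u a)) (u b) = (\<Sum>i<n. (\<Sum>l<m. X $$ (i,l) * w a l) * cnj (u b i))"
      unfolding ip_def w_def using Mmv by (intro sum.cong) auto
    also have "\<dots> = (\<Sum>l<m. \<Sum>i<n. w a l * (X $$ (i,l) * cnj (u b i)))"
      by (simp add: sum_distrib_right) (subst sum.swap, simp add: mult_ac)
    also have "\<dots> = ip m (w a) (w b)"
      unfolding ip_def w_def by (simp add: sum_distrib_left)
    finally show ?thesis using 1 by simp
  qed
  have lam0: "lam k \<ge> 0" if "k < n" for k
  proof -
    have "of_real (lam k) = ip m (w k) (w k)" using ipw[OF that that] by simp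
    hence "lam k = Re (ip m (w k) (w k))" by (metis Re_complex_of_real)
    thus ?thesis using ip_self_nonneg by simp
  qed
  define ee where "ee k = (\<lambda>l. w k l / of_real (sqrt (lam k)))" for k
  have ipee: "ip m (ee a) (ee b) = ip m (w a) (w b) / (of_real (sqrt (lam a)) * of_real (sqrt (lam b)))" for a b
    unfolding ee_def ip_def by (simp add: sum_divide_distrib)
  have eo1: "ip m (ee a) (ee b) = 0" if "a < n" "b < n" "a \<noteq> b" for a b
    using ipee ipw that by simp
  have eo2: "ip m (ee a) (ee a) = 0 \<or> ip m (ee a) (ee a) = 1" if "a < n" for a
  proof (cases "lam a = 0")
    case True thus ?thesis using ipee[of a a] by simp
  next
    case False
    hence "sqrt (lam a) * sqrt (lam a) = lam a" using lam0[OF that] by simp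
    hence "of_real (sqrt (lam a)) * of_real (sqrt (lam a)) = (of_real (lam a) :: complex)"
      by (metis of_real_mult)
    thus ?thesis using ipee[of a a] ipw[OF that that] False by simp
  qed
  have wee: "ip m (w k) (ee k) = of_real (sqrt (lam k))" if "k < n" for k
  proof (cases "lam k = 0")
    case True
    have "ip m (w k) (ee k) = ip m (w k) (\<lambda>l. 0)" unfolding ee_def True by simp
    thus ?thesis using True by (simp add: ip_def)
  next
    case False
    have "ip m (w k) (ee k) = ip m (w k) (w k) / of_real (sqrt (lam k))"
      unfolding ee_def ip_def by (simp add: sum_divide_distrib)
    also have "\<dots> = of_real (lam k / sqrt (lam k))" using ipw[OF that that] by simp
    also have "lam k / sqrt (lam k) = sqrt (lam k)" using lam0[OF that] False
      by (metis real_div_sqrt)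
    finally show ?thesis .
  qed
  define zc where "zc s = (\<lambda>l. cnj (z s l))" for s
  have wexp: "w k l = (\<Sum>s<K. of_real (c s) * cnj (z s l) * ip n (u k) (x s))" if "l < m" for k l
  proof -
    have "w k l = (\<Sum>i<n. \<Sum>s<K. of_real (c s) * cnj (z s l) * (u k i * cnj (x s i)))"
      unfolding w_def using Xe that by (auto intro!: sum.cong simp: sum_distrib_left mult_ac)
    also have "\<dots> = (\<Sum>s<K. of_real (c s) * cnj (z s l) * ip n (u k) (x s))"
      unfolding ip_def by (subst sum.swap) (simp add: sum_distrib_left)
    finally show ?thesis .
  qed
  have wip: "ip m (w k) (ee k) = (\<Sum>s<K. of_real (c s) * ip n (u k) (x s) * cnj (ip m (ee k) (zc s)))" for k
  proof -
    have "ip m (w k) (ee k) = (\<Sum>l<m. (\<Sum>s<K. of_real (c s) * cnj (z s l) * ip n (u k) (x s)) * cnj (ee k l))"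
      unfolding ip_def[of m] using wexp by (intro sum.cong) auto
    also have "\<dots> = (\<Sum>l<m. \<Sum>s<K. of_real (c s) * ip n (u k) (x s) * (cnj (z s l) * cnj (ee k l)))"
      by (simp add: sum_distrib_right sum_distrib_left mult_ac)
    also have "\<dots> = (\<Sum>s<K. of_real (c s) * ip n (u k) (x s) * cnj (ip m (ee k) (zc s)))"
      unfolding ip_def[of m] zc_def by (subst sum.swap) (simp add: sum_distrib_left mult_ac)
    finally show ?thesis .
  qed
  define A where "A s k = cmod (ip n (x s) (u k))" for s k
  define B where "B s k = cmod (ip m (zc s) (ee k))" for s k
  have step: "sqrt (lam k) \<le> (\<Sum>s<K. c s * (A s k * B s k))" if "k < n" for k
  proof -
    have "sqrt (lam k) = cmod (ip m (w k) (ee k))" using wee[OF that] lam0[OF that] by simp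
    also have "\<dots> \<le> (\<Sum>s<K. cmod (of_real (c s) * ip n (u k) (x s) * cnj (ip m (ee k) (zc s))))"
      unfolding wip by (rule norm_sum)
    also have "\<dots> = (\<Sum>s<K. c s * (A s k * B s k))"
      unfolding A_def B_def using c
      by (intro sum.cong refl) (simp add: norm_mult cmod_ip_sym[of n "u k"] cmod_ip_sym[of m "ee k"])
    finally show ?thesis .
  qed
  have "trace_norm X \<le> (\<Sum>k<n. \<Sum>s<K. c s * (A s k * B s k))"
    unfolding tn by (rule sum_mono) (rule step, simp)
  also have "\<dots> = (\<Sum>s<K. c s * (\<Sum>k<n. A s k * B s k))"
    by (subst sum.swap) (simp add: sum_distrib_left)
  also have "\<dots> \<le> (\<Sum>s<K. c s * (sqrt (\<Sum>k<n. (A s k)\<^sup>2) * sqrt (\<Sum>k<n. (B s k)\<^sup>2)))"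
    by (intro sum_mono mult_left_mono cs_sqrt c) simp
  also have "\<dots> \<le> (\<Sum>s<K. c s * (sqrt (\<Sum>i<n. (cmod (x s i))\<^sup>2) * sqrt (\<Sum>j<m. (cmod (z s j))\<^sup>2)))"
  proof (intro sum_mono mult_left_mono mult_mono c)
    fix s
    show "sqrt (\<Sum>k<n. (A s k)\<^sup>2) \<le> sqrt (\<Sum>i<n. (cmod (x s i))\<^sup>2)"
      unfolding A_def by (rule real_sqrt_le_mono, rule bessel) (use o in auto)
    have "(\<Sum>k<n. (B s k)\<^sup>2) \<le> (\<Sum>l<m. (cmod (zc s l))\<^sup>2)"
      unfolding B_def by (rule bessel) (use eo1 eo2 in auto)
    thus "sqrt (\<Sum>k<n. (B s k)\<^sup>2) \<le> sqrt (\<Sum>j<m. (cmod (z s j))\<^sup>2)"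
      unfolding zc_def by simp
  qed (auto simp: sum_nonneg)
  finally show ?thesis by (simp add: mult.assoc)
qed

lemma sum_split: "(\<Sum>I<a*b. F I) = (\<Sum>x<a. \<Sum>y<b. F (x*b + y))" for a b :: nat
proof -
  have "(\<Sum>I<a*b. F I) = (\<Sum>x<a. sum F {x*b..<x*b+b})" by (rule sum.nat_group[symmetric])
  also have "\<dots> = (\<Sum>x<a. \<Sum>y<b. F (x*b + y))"
  proof (rule sum.cong[OF refl])
    fix x
    have "sum F {x*b..<x*b+b} = sum F {0+x*b..<b+x*b}" by (simp add: add.commute)
    also have "\<dots> = (\<Sum>y=0..<b. F (y + x*b))" by (rule sum.shift_bounds_nat_ivl)
    finally show "sum F {x*b..<x*b+b} = (\<Sum>y<b. F (x*b + y))" by (simp add: atLeast0LessThan add.commute)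
  qed
  finally show ?thesis .
qed

lemma sum_mod_shift:
  assumes "0 < (d::nat)"
  shows "(\<Sum>j<d. g ((m + j) mod d)) = (\<Sum>j<d. g j :: 'a :: ab_group_add)"
proof (induction m)
  case 0
  show ?case by simp
next
  case (Suc m)
  define f where "f j = g ((m + j) mod d)" for j
  have fd: "f d = f 0" unfolding f_def by simp
  have "(\<Sum>j<d. g ((Suc m + j) mod d)) = (\<Sum>j<d. f (Suc j))" unfolding f_def by simp
  also have "\<dots> = (\<Sum>j<d. f j)"
  proof -
    have "f 0 + (\<Sum>j<d. f (Suc j)) = (\<Sum>j<d. f j) + f d"
      using sum.lessThan_Suc_shift[of f d] sum.lessThan_Suc[of f d] by simp
    thus ?thesis using fd by (simp add: algebra_simps)
  qed
  finally show ?case using Suc unfolding f_def by simp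
qed

lemma prim_root_unit:
  assumes "prim_root d w" "0 < d"
  shows "cnj w * w = 1"
proof -
  have "cmod w ^ d = 1" using assms unfolding prim_root_def by (metis norm_one norm_power)
  hence "cmod w ^ d = 1 ^ d" by simp
  hence "cmod w = 1" using power_eq_iff_eq_base[OF assms(2), of "cmod w" 1] by simp
  hence "cnj w * w = of_real (1 ^ 2)" by (metis complex_norm_square mult.commute)
  thus ?thesis by simp
qed

lemma geom_orth:
  assumes pr: "prim_root d w" and d0: "0 < d" and m: "m < d" and m': "m' < d"
  shows "(\<Sum>i<d. cnj w ^ (i*m) * w ^ (i*m')) = (if m = m' then of_nat d else 0)"
proof -
  have u: "cnj w * w = 1" by (rule prim_root_unit[OF pr d0])
  have wd: "w ^ d = 1" using pr unfolding prim_root_def by simp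
  define q where "q = cnj w ^ m * w ^ m'"
  have terms: "cnj w ^ (i*m) * w ^ (i*m') = q ^ i" for i
  proof -
    have "cnj w ^ (i*m) * w ^ (i*m') = (cnj w ^ m) ^ i * (w ^ m') ^ i"
      by (simp add: power_mult[symmetric] mult.commute)
    thus ?thesis unfolding q_def by (simp add: power_mult_distrib)
  qed
  show ?thesis
  proof (cases "m = m'")
    case True
    hence "q = 1" unfolding q_def using u by (simp add: power_mult_distrib[symmetric])
    thus ?thesis using True terms by simp
  next
    case False
    have "q ^ d = cnj w ^ (m * d) * w ^ (m' * d)" unfolding q_def
      by (simp add: power_mult_distrib power_mult)
    also have "\<dots> = cnj (w ^ d) ^ m * (w ^ d) ^ m'"
      by (simp add: power_mult[symmetric] mult.commute)
    finally have qd: "q ^ d = 1" using wd by simp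
    have q1: "q \<noteq> 1"
    proof (cases "m < m'")
      case True
      have "q = (cnj w * w) ^ m * w ^ (m' - m)" unfolding q_def using True
        by (simp add: power_mult_distrib power_add[symmetric])
      hence "q = w ^ (m' - m)" using u by simp
      moreover have "w ^ (m' - m) \<noteq> 1" using pr True m' unfolding prim_root_def by auto
      ultimately show ?thesis by simp
    next
      case False
      hence lt: "m' < m" using \<open>m \<noteq> m'\<close> by simp
      have "q = cnj w ^ (m - m') * (cnj w * w) ^ m'" unfolding q_def using lt
        by (simp add: power_mult_distrib power_add[symmetric])
      hence "q = cnj (w ^ (m - m'))" using u by simp
      moreover have "w ^ (m - m') \<noteq> 1" using pr lt m unfolding prim_root_def by auto
      ultimately show ?thesis by (metis complex_cnj_cnj complex_cnj_one)
    qed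
    have "(\<Sum>i<d. q ^ i) = (q ^ d - 1) / (q - 1)" using geometric_sum[OF q1] by simp
    thus ?thesis using qd False terms by simp
  qed
qed

lemma cmod_sq_c: "complex_of_real ((cmod z)\<^sup>2) = z * cnj z"
  by (rule complex_norm_square)

lemma dft_parseval:
  assumes pr: "prim_root d w" and d0: "0 < d"
  shows "(\<Sum>i<d. (cmod (\<Sum>m<d. c m * cnj w ^ (i*m)))\<^sup>2) = real d * (\<Sum>m<d. (cmod (c m))\<^sup>2)"
proof -
  have "complex_of_real (\<Sum>i<d. (cmod (\<Sum>m<d. c m * cnj w ^ (i*m)))\<^sup>2)
      = (\<Sum>i<d. (\<Sum>m<d. c m * cnj w ^ (i*m)) * cnj (\<Sum>m'<d. c m' * cnj w ^ (i*m')))"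
    unfolding of_real_sum by (intro sum.cong refl) (rule cmod_sq_c)
  also have "\<dots> = (\<Sum>i<d. \<Sum>m<d. \<Sum>m'<d. c m * cnj (c m') * (cnj w ^ (i*m) * w ^ (i*m')))"
    by (simp add: sum_distrib_left sum_distrib_right mult_ac) (rule sum.cong[OF refl], subst sum.swap, simp add: mult_ac)
  also have "\<dots> = (\<Sum>m<d. \<Sum>m'<d. c m * cnj (c m') * (\<Sum>i<d. cnj w ^ (i*m) * w ^ (i*m')))"
    by (simp add: sum_distrib_left) (subst sum.swap, rule sum.cong[OF refl], rule sum.swap)
  also have "\<dots> = (\<Sum>m<d. \<Sum>m'<d. c m * cnj (c m') * (if m = m' then of_nat d else 0))"
    by (intro sum.cong refl) (simp add: geom_orth[OF pr d0])
  also have "\<dots> = (\<Sum>m<d. c m * cnj (c m) * of_nat d)"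
  proof (rule sum.cong[OF refl])
    fix m assume "m \<in> {..<d}"
    have "(\<Sum>m'<d. c m * cnj (c m') * (if m = m' then of_nat d else 0)) = (\<Sum>m'<d. if m' = m then c m * cnj (c m') * of_nat d else 0)"
      by (intro sum.cong) auto
    also have "\<dots> = c m * cnj (c m) * of_nat d" using \<open>m \<in> {..<d}\<close> by (subst sum.delta) auto
    finally show "(\<Sum>m'<d. c m * cnj (c m') * (if m = m' then of_nat d else 0)) = c m * cnj (c m) * of_nat d" .
  qed
  also have "\<dots> = (\<Sum>m<d. of_nat d * complex_of_real ((cmod (c m))\<^sup>2))"
    by (intro sum.cong refl) (simp only: cmod_sq_c mult.commute)
  also have "\<dots> = complex_of_real (real d * (\<Sum>m<d. (cmod (c m))\<^sup>2))"
    by (simp only: of_real_mult of_real_sum of_real_of_nat_eq sum_distrib_left)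
  finally show ?thesis by (simp only: of_real_eq_iff)
qed

definition pt :: "nat \<Rightarrow> complex \<Rightarrow> (nat \<Rightarrow> nat \<Rightarrow> complex) \<Rightarrow> nat \<Rightarrow> complex" where
  "pt d w R u = (\<Sum>m<d. \<Sum>n<d. R m n * cnj (pauli d w u $$ (m,n)))"

lemma pauli_entry: "m < d \<Longrightarrow> n < d \<Longrightarrow>
  pauli d w u $$ (m,n) = (if n = (m + u mod d) mod d then w ^ (u div d * m) else 0)"
  unfolding pauli_def by simp

lemma pt_expand:
  assumes "0 < d"
  shows "pt d w R u = (\<Sum>m<d. R m ((m + u mod d) mod d) * cnj w ^ (u div d * m))"
  unfolding pt_def
proof (rule sum.cong[OF refl])
  fix m assume m: "m \<in> {..<d}"
  have "(\<Sum>n<d. R m n * cnj (pauli d w u $$ (m, n)))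
     = (\<Sum>n<d. if n = (m + u mod d) mod d then R m n * cnj w ^ (u div d * m) else 0)"
    using m by (intro sum.cong) (auto simp: pauli_entry)
  also have "\<dots> = R m ((m + u mod d) mod d) * cnj w ^ (u div d * m)"
    using assms by (subst sum.delta) auto
  finally show "(\<Sum>n<d. R m n * cnj (pauli d w u $$ (m, n))) = R m ((m + u mod d) mod d) * cnj w ^ (u div d * m)" .
qed

lemma parseval:
  assumes pr: "prim_root d w" and d0: "0 < d"
  shows "(\<Sum>u<d*d. (cmod (pt d w R u))\<^sup>2) = real d * (\<Sum>m<d. \<Sum>n<d. (cmod (R m n))\<^sup>2)"
proof -
  have "(\<Sum>u<d*d. (cmod (pt d w R u))\<^sup>2) = (\<Sum>i<d. \<Sum>j<d. (cmod (pt d w R (i*d + j)))\<^sup>2)"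
    by (rule sum_split)
  also have "\<dots> = (\<Sum>j<d. \<Sum>i<d. (cmod (\<Sum>m<d. R m ((m + j) mod d) * cnj w ^ (i*m)))\<^sup>2)"
  proof (subst sum.swap, intro sum.cong refl)
    fix j i assume "j \<in> {..<d}" "i \<in> {..<d}"
    hence "(i*d + j) mod d = j" "(i*d + j) div d = i" by auto
    thus "(cmod (pt d w R (i*d + j)))\<^sup>2 = (cmod (\<Sum>m<d. R m ((m + j) mod d) * cnj w ^ (i*m)))\<^sup>2"
      by (simp add: pt_expand[OF d0])
  qed
  also have "\<dots> = (\<Sum>j<d. real d * (\<Sum>m<d. (cmod (R m ((m + j) mod d)))\<^sup>2))"
    by (intro sum.cong refl dft_parseval[OF pr d0])
  also have "\<dots> = real d * (\<Sum>m<d. \<Sum>j<d. (cmod (R m ((m + j) mod d)))\<^sup>2)"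
    by (simp add: sum_distrib_left) (rule sum.swap)
  also have "\<dots> = real d * (\<Sum>m<d. \<Sum>n<d. (cmod (R m n))\<^sup>2)"
    by (intro arg_cong[where f = "\<lambda>x. real d * x"]) (rule sum.cong[OF refl], rule sum_mod_shift[OF d0])
  finally show ?thesis .
qed

lemma ccs:
  fixes a b :: "nat \<Rightarrow> complex"
  shows "(cmod (\<Sum>i\<in>S. a i * cnj (b i)))\<^sup>2 \<le> (\<Sum>i\<in>S. (cmod (a i))\<^sup>2) * (\<Sum>i\<in>S. (cmod (b i))\<^sup>2)"
proof -
  have "cmod (\<Sum>i\<in>S. a i * cnj (b i)) \<le> (\<Sum>i\<in>S. cmod (a i) * cmod (b i))"
    by (rule order_trans[OF norm_sum]) (simp add: norm_mult)
  hence "(cmod (\<Sum>i\<in>S. a i * cnj (b i)))\<^sup>2 \<le> (\<Sum>i\<in>S. cmod (a i) * cmod (b i))\<^sup>2"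
    by (rule power_mono) simp
  also have "\<dots> \<le> (\<Sum>i\<in>S. (cmod (a i))\<^sup>2) * (\<Sum>i\<in>S. (cmod (b i))\<^sup>2)" by (rule cs_real)
  finally show ?thesis .
qed

lemma gram_identity:
  fixes a :: "'k \<Rightarrow> nat \<Rightarrow> complex"
  shows "(\<Sum>i\<in>S. \<Sum>j\<in>S. (cmod (\<Sum>k\<in>Ks. a k i * cnj (a k j)))\<^sup>2)
       = (\<Sum>k\<in>Ks. \<Sum>l\<in>Ks. (cmod (\<Sum>i\<in>S. a k i * cnj (a l i)))\<^sup>2)"
proof -
  have "complex_of_real (\<Sum>i\<in>S. \<Sum>j\<in>S. (cmod (\<Sum>k\<in>Ks. a k i * cnj (a k j)))\<^sup>2)
     = (\<Sum>i\<in>S. \<Sum>j\<in>S. (\<Sum>k\<in>Ks. a k i * cnj (a k j)) * cnj (\<Sum>l\<in>Ks. a l i * cnj (a l j)))"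
    unfolding of_real_sum by (intro sum.cong refl) (rule complex_norm_square)
  also have "\<dots> = (\<Sum>i\<in>S. \<Sum>j\<in>S. \<Sum>k\<in>Ks. \<Sum>l\<in>Ks. a k i * cnj (a k j) * (cnj (a l i) * a l j))"
    by (simp add: sum_distrib_left sum_distrib_right) (rule sum.cong[OF refl], rule sum.cong[OF refl], rule sum.swap)
  also have "\<dots> = (\<Sum>i\<in>S. \<Sum>k\<in>Ks. \<Sum>j\<in>S. \<Sum>l\<in>Ks. a k i * cnj (a k j) * (cnj (a l i) * a l j))"
    by (rule sum.cong[OF refl], rule sum.swap)
  also have "\<dots> = (\<Sum>i\<in>S. \<Sum>k\<in>Ks. \<Sum>l\<in>Ks. \<Sum>j\<in>S. a k i * cnj (a k j) * (cnj (a l i) * a l j))"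
    by (rule sum.cong[OF refl], rule sum.cong[OF refl], rule sum.swap)
  also have "\<dots> = (\<Sum>k\<in>Ks. \<Sum>i\<in>S. \<Sum>l\<in>Ks. \<Sum>j\<in>S. a k i * cnj (a k j) * (cnj (a l i) * a l j))"
    by (rule sum.swap)
  also have "\<dots> = (\<Sum>k\<in>Ks. \<Sum>l\<in>Ks. \<Sum>i\<in>S. \<Sum>j\<in>S. a k i * cnj (a k j) * (cnj (a l i) * a l j))"
    by (rule sum.cong[OF refl], rule sum.swap)
  also have "\<dots> = (\<Sum>k\<in>Ks. \<Sum>l\<in>Ks. (\<Sum>i\<in>S. a k i * cnj (a l i)) * cnj (\<Sum>j\<in>S. a k j * cnj (a l j)))"
    by (simp add: sum_distrib_left sum_distrib_right mult_ac) (rule sum.cong[OF refl], rule sum.cong[OF refl], rule sum.swap)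
  also have "\<dots> = complex_of_real (\<Sum>k\<in>Ks. \<Sum>l\<in>Ks. (cmod (\<Sum>i\<in>S. a k i * cnj (a l i)))\<^sup>2)"
    unfolding of_real_sum by (intro sum.cong refl) (rule complex_norm_square[symmetric])
  finally show ?thesis by (simp only: of_real_eq_iff)
qed

lemma gram_bound:
  fixes a :: "'k \<Rightarrow> nat \<Rightarrow> complex"
  shows "(\<Sum>i\<in>S. \<Sum>j\<in>S. (cmod (\<Sum>k\<in>Ks. a k i * cnj (a k j)))\<^sup>2)
       \<le> (\<Sum>k\<in>Ks. \<Sum>i\<in>S. (cmod (a k i))\<^sup>2)\<^sup>2"
proof -
  have "(\<Sum>i\<in>S. \<Sum>j\<in>S. (cmod (\<Sum>k\<in>Ks. a k i * cnj (a k j)))\<^sup>2)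
       = (\<Sum>k\<in>Ks. \<Sum>l\<in>Ks. (cmod (\<Sum>i\<in>S. a k i * cnj (a l i)))\<^sup>2)" by (rule gram_identity)
  also have "\<dots> \<le> (\<Sum>k\<in>Ks. \<Sum>l\<in>Ks. (\<Sum>i\<in>S. (cmod (a k i))\<^sup>2) * (\<Sum>i\<in>S. (cmod (a l i))\<^sup>2))"
    by (intro sum_mono ccs)
  also have "\<dots> = (\<Sum>k\<in>Ks. \<Sum>i\<in>S. (cmod (a k i))\<^sup>2)\<^sup>2"
    by (simp only: power2_eq_square[of "sum _ Ks"] sum_product)
  finally show ?thesis .
qed

lemma sq_sum_le_card:
  fixes z :: "nat \<Rightarrow> complex"
  shows "(cmod (\<Sum>y<B. z y))\<^sup>2 \<le> real B * (\<Sum>y<B. (cmod (z y))\<^sup>2)"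
  using ccs[of z "\<lambda>_. 1" "{..<B}"] by (simp add: mult.commute)

lemma sum_KB: "(\<Sum>p\<in>{..<K}\<times>{..<B}. F p) = (\<Sum>k<(K::nat). \<Sum>y<(B::nat). F (k,y))"
  by (simp add: sum.cartesian_product)

lemma purity_abstract:
  fixes h :: "nat \<Rightarrow> nat \<Rightarrow> complex" and \<phi> :: "nat \<Rightarrow> nat \<Rightarrow> nat"
  assumes splitC: "\<And>F :: nat \<Rightarrow> complex. (\<Sum>I<n. F I) = (\<Sum>x<A. \<Sum>y<B. F (\<phi> x y))"
    and splitR: "\<And>F :: nat \<Rightarrow> real. (\<Sum>I<n. F I) = (\<Sum>x<A. \<Sum>y<B. F (\<phi> x y))"
    and R: "\<And>I J. R I J = (\<Sum>k<K. h k I * cnj (h k J))"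
  shows "(\<Sum>I<n. \<Sum>J<n. (cmod (R I J))\<^sup>2) \<le> real B * (\<Sum>x<A. \<Sum>x'<A. (cmod (\<Sum>y<B. R (\<phi> x y) (\<phi> x' y)))\<^sup>2)"
    and "(\<Sum>x<A. \<Sum>x'<A. (cmod (\<Sum>y<B. R (\<phi> x y) (\<phi> x' y)))\<^sup>2) \<le> (\<Sum>k<K. \<Sum>I<n. (cmod (h k I))\<^sup>2)\<^sup>2"
proof -
  define KB where "KB = {..<K} \<times> {..<B}"
  define g where "g p x = h (fst p) (\<phi> x (snd p))" for p x
  define G where "G p q = (\<Sum>x<A. g p x * cnj (g q x))" for p q
  have inner: "(\<Sum>y<B. R (\<phi> x y) (\<phi> x' y)) = (\<Sum>p\<in>KB. g p x * cnj (g p x'))" for x x'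
  proof -
    have "(\<Sum>y<B. R (\<phi> x y) (\<phi> x' y)) = (\<Sum>y<B. \<Sum>k<K. h k (\<phi> x y) * cnj (h k (\<phi> x' y)))"
      using R by simp
    also have "\<dots> = (\<Sum>k<K. \<Sum>y<B. h k (\<phi> x y) * cnj (h k (\<phi> x' y)))" by (rule sum.swap)
    also have "\<dots> = (\<Sum>p\<in>KB. g p x * cnj (g p x'))"
      unfolding KB_def g_def sum_KB by simp
    finally show ?thesis .
  qed
  have P_eq: "(\<Sum>x<A. \<Sum>x'<A. (cmod (\<Sum>y<B. R (\<phi> x y) (\<phi> x' y)))\<^sup>2) = (\<Sum>p\<in>KB. \<Sum>q\<in>KB. (cmod (G p q))\<^sup>2)"
    unfolding inner G_def by (rule gram_identity)
  have norm_eq: "(\<Sum>p\<in>KB. \<Sum>x<A. (cmod (g p x))\<^sup>2) = (\<Sum>k<K. \<Sum>I<n. (cmod (h k I))\<^sup>2)"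
  proof -
    have "(\<Sum>p\<in>KB. \<Sum>x<A. (cmod (g p x))\<^sup>2) = (\<Sum>k<K. \<Sum>y<B. \<Sum>x<A. (cmod (h k (\<phi> x y)))\<^sup>2)"
      unfolding KB_def g_def sum_KB by simp
    also have "\<dots> = (\<Sum>k<K. \<Sum>x<A. \<Sum>y<B. (cmod (h k (\<phi> x y)))\<^sup>2)"
      by (rule sum.cong[OF refl], rule sum.swap)
    also have "\<dots> = (\<Sum>k<K. \<Sum>I<n. (cmod (h k I))\<^sup>2)"
      by (rule sum.cong[OF refl], rule splitR[symmetric])
    finally show ?thesis .
  qed
  show "(\<Sum>x<A. \<Sum>x'<A. (cmod (\<Sum>y<B. R (\<phi> x y) (\<phi> x' y)))\<^sup>2) \<le> (\<Sum>k<K. \<Sum>I<n. (cmod (h k I))\<^sup>2)\<^sup>2"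
    unfolding inner norm_eq[symmetric] by (rule gram_bound)
  have "(\<Sum>I<n. \<Sum>J<n. (cmod (R I J))\<^sup>2) = (\<Sum>k<K. \<Sum>l<K. (cmod (\<Sum>I<n. h k I * cnj (h l I)))\<^sup>2)"
    unfolding R by (rule gram_identity)
  also have "\<dots> = (\<Sum>k<K. \<Sum>l<K. (cmod (\<Sum>y<B. G (k,y) (l,y)))\<^sup>2)"
  proof (intro sum.cong refl)
    fix k l
    have "(\<Sum>I<n. h k I * cnj (h l I)) = (\<Sum>x<A. \<Sum>y<B. h k (\<phi> x y) * cnj (h l (\<phi> x y)))"
      by (rule splitC)
    also have "\<dots> = (\<Sum>y<B. G (k,y) (l,y))" unfolding G_def g_def by (simp, rule sum.swap)
    finally show "(cmod (\<Sum>I<n. h k I * cnj (h l I)))\<^sup>2 = (cmod (\<Sum>y<B. G (k,y) (l,y)))\<^sup>2" by simp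
  qed
  also have "\<dots> \<le> (\<Sum>k<K. \<Sum>l<K. real B * (\<Sum>y<B. \<Sum>y'<B. (cmod (G (k,y) (l,y')))\<^sup>2))"
  proof (intro sum_mono)
    fix k l
    have "(cmod (\<Sum>y<B. G (k,y) (l,y)))\<^sup>2 \<le> real B * (\<Sum>y<B. (cmod (G (k,y) (l,y)))\<^sup>2)"
      by (rule sq_sum_le_card)
    also have "\<dots> \<le> real B * (\<Sum>y<B. \<Sum>y'<B. (cmod (G (k,y) (l,y')))\<^sup>2)"
      by (intro mult_left_mono sum_mono member_le_sum) auto
    finally show "(cmod (\<Sum>y<B. G (k,y) (l,y)))\<^sup>2 \<le> real B * (\<Sum>y<B. \<Sum>y'<B. (cmod (G (k,y) (l,y')))\<^sup>2)" .
  qed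
  also have "\<dots> = real B * (\<Sum>p\<in>KB. \<Sum>q\<in>KB. (cmod (G p q))\<^sup>2)"
  proof -
    have "(\<Sum>p\<in>KB. \<Sum>q\<in>KB. (cmod (G p q))\<^sup>2) = (\<Sum>k<K. \<Sum>y<B. \<Sum>l<K. \<Sum>y'<B. (cmod (G (k,y) (l,y')))\<^sup>2)"
      unfolding KB_def sum_KB by simp
    also have "\<dots> = (\<Sum>k<K. \<Sum>l<K. \<Sum>y<B. \<Sum>y'<B. (cmod (G (k,y) (l,y')))\<^sup>2)"
      by (rule sum.cong[OF refl], rule sum.swap)
    finally show ?thesis by (simp add: sum_distrib_left)
  qed
  finally show "(\<Sum>I<n. \<Sum>J<n. (cmod (R I J))\<^sup>2) \<le> real B * (\<Sum>x<A. \<Sum>x'<A. (cmod (\<Sum>y<B. R (\<phi> x y) (\<phi> x' y)))\<^sup>2)"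
    unfolding P_eq .
qed

lemma density_herm: "density n R \<Longrightarrow> herm n R"
proof -
  assume d: "density n R"
  hence R: "R \<in> carrier_mat n n" and a: "adj R = R" unfolding density_def by auto
  have "R $$ (i,j) = cnj (R $$ (j,i))" if "i < n" "j < n" for i j
  proof -
    have "adj R $$ (i,j) = cnj (R $$ (j,i))" using R that unfolding adj_def by auto
    thus ?thesis using a by simp
  qed
  thus "herm n R" using R unfolding herm_def by blast
qed

lemma density_factor:
  assumes d: "density n R"
  shows "\<exists>h. (\<forall>i<n. \<forall>j<n. R $$ (i,j) = (\<Sum>k<n. h k i * cnj (h k j))) \<and>
             (\<Sum>k<n. \<Sum>i<n. (cmod (h k i))\<^sup>2) = 1"
proof -
  have H: "herm n R" by (rule density_herm[OF d])
  have R: "R \<in> carrier_mat n n" and psd: "\<And>v. 0 \<le> Re (\<Sum>i<n. \<Sum>j<n. cnj (v i) * R $$ (i, j) * v j)"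
    and tr: "mtrace R = 1" using d unfolding density_def by auto
  obtain u lam where o: "\<forall>a<n. \<forall>b<n. ip n (u a) (u b) = (if a = b then 1 else 0)"
    and e: "\<forall>a<n. \<forall>i<n. mvf n R (u a) i = of_real (lam a) * u a i"
    and Aexp: "\<forall>i<n. \<forall>j<n. R $$ (i,j) = (\<Sum>k<n. of_real (lam k) * u k i * cnj (u k j))"
    using spectral[OF H] by blast
  have nu: "(\<Sum>i<n. (cmod (u k i))\<^sup>2) = 1" if "k < n" for k
    using ip_self_real(1)[of n "u k"] o that by simp
  have lam0: "lam k \<ge> 0" if "k < n" for k
  proof -
    have "(\<Sum>i<n. \<Sum>j<n. cnj (u k i) * R $$ (i, j) * u k j) = (\<Sum>i<n. cnj (u k i) * mvf n R (u k) i)"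
      unfolding mvf_def by (simp add: sum_distrib_left mult.assoc)
    also have "\<dots> = (\<Sum>i<n. of_real (lam k) * (u k i * cnj (u k i)))"
      using e that by (intro sum.cong) auto
    also have "\<dots> = of_real (lam k) * ip n (u k) (u k)" unfolding ip_def by (simp add: sum_distrib_left)
    also have "\<dots> = of_real (lam k)" using o that by simp
    finally show ?thesis using psd[of "u k"] by simp
  qed
  define h where "h k i = of_real (sqrt (lam k)) * u k i" for k i
  have "\<forall>i<n. \<forall>j<n. R $$ (i,j) = (\<Sum>k<n. h k i * cnj (h k j))"
  proof (intro allI impI)
    fix i j assume "i < n" "j < n"
    hence "R $$ (i,j) = (\<Sum>k<n. of_real (lam k) * u k i * cnj (u k j))" using Aexp by auto
    also have "\<dots> = (\<Sum>k<n. h k i * cnj (h k j))"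
    proof (intro sum.cong refl)
      fix k assume "k \<in> {..<n}"
      hence "sqrt (lam k) * sqrt (lam k) = lam k" using lam0 by simp
      hence "of_real (sqrt (lam k)) * of_real (sqrt (lam k)) = (of_real (lam k) :: complex)"
        by (metis of_real_mult)
      moreover have "h k i * cnj (h k j) = (of_real (sqrt (lam k)) * of_real (sqrt (lam k))) * (u k i * cnj (u k j))"
        unfolding h_def by (simp add: mult_ac)
      ultimately show "of_real (lam k) * u k i * cnj (u k j) = h k i * cnj (h k j)"
        by (simp add: mult.assoc)
    qed
    finally show "R $$ (i,j) = (\<Sum>k<n. h k i * cnj (h k j))" .
  qed
  moreover have "(\<Sum>k<n. \<Sum>i<n. (cmod (h k i))\<^sup>2) = 1"
  proof -
    have "(\<Sum>k<n. \<Sum>i<n. (cmod (h k i))\<^sup>2) = (\<Sum>k<n. lam k * (\<Sum>i<n. (cmod (u k i))\<^sup>2))"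
      unfolding h_def using lam0
      by (intro sum.cong refl) (simp add: norm_mult power_mult_distrib sum_distrib_left)
    also have "\<dots> = (\<Sum>k<n. lam k)" using nu by simp
    also have "\<dots> = 1"
    proof -
      have "mtrace R = (\<Sum>i<n. R $$ (i,i))" unfolding mtrace_def using R by simp
      also have "\<dots> = (\<Sum>i<n. \<Sum>k<n. of_real (lam k) * (u k i * cnj (u k i)))"
        using Aexp by (intro sum.cong) (auto simp: mult.assoc)
      also have "\<dots> = (\<Sum>k<n. of_real (lam k) * ip n (u k) (u k))"
        unfolding ip_def by (subst sum.swap) (simp add: sum_distrib_left)
      also have "\<dots> = (\<Sum>k<n. of_real (lam k))" using o by simp
      finally have "complex_of_real (\<Sum>k<n. lam k) = 1" using tr by simp
      thus ?thesis by (metis of_real_eq_1_iff)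
    qed
    finally show ?thesis .
  qed
  ultimately show ?thesis by blast
qed

definition pt2 :: "nat \<Rightarrow> nat \<Rightarrow> complex \<Rightarrow> complex \<Rightarrow> (nat \<Rightarrow> nat \<Rightarrow> complex) \<Rightarrow> nat \<Rightarrow> nat \<Rightarrow> complex" where
  "pt2 da db wa wb R ua ub = (\<Sum>I<da*db. \<Sum>J<da*db. R I J *
     cnj (pauli da wa ua $$ (I div db, J div db) * pauli db wb ub $$ (I mod db, J mod db)))"

lemma pt2_nested:
  assumes db: "0 < db"
  shows "pt2 da db wa wb R ua ub = pt da wa (\<lambda>x x'. pt db wb (\<lambda>y y'. R (x*db+y) (x'*db+y')) ub) ua"
proof -
  have "pt2 da db wa wb R ua ub = (\<Sum>x<da. \<Sum>y<db. \<Sum>x'<da. \<Sum>y'<db. R (x*db+y) (x'*db+y') *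
     cnj (pauli da wa ua $$ (x, x') * pauli db wb ub $$ (y, y')))"
    unfolding pt2_def sum_split using db by (intro sum.cong refl) auto
  also have "\<dots> = (\<Sum>x<da. \<Sum>x'<da. \<Sum>y<db. \<Sum>y'<db. R (x*db+y) (x'*db+y') *
     cnj (pauli da wa ua $$ (x, x') * pauli db wb ub $$ (y, y')))"
    by (rule sum.cong[OF refl], rule sum.swap)
  also have "\<dots> = pt da wa (\<lambda>x x'. pt db wb (\<lambda>y y'. R (x*db+y) (x'*db+y')) ub) ua"
    unfolding pt_def by (simp add: sum_distrib_right sum_distrib_left mult_ac)
  finally show ?thesis .
qed

lemma pt_zero:
  assumes "0 < d"
  shows "pt d w R 0 = (\<Sum>m<d. R m m)"
  unfolding pt_expand[OF assms] by (intro sum.cong refl) simp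

lemma pt_sum: "pt d w (\<lambda>m n. \<Sum>k\<in>S. F k m n) u = (\<Sum>k\<in>S. pt d w (F k) u)"
  unfolding pt_def by (simp add: sum_distrib_right) (subst sum.swap, rule sum.cong[OF refl], rule sum.swap)

lemma parseval2:
  assumes pa: "prim_root da wa" and pb: "prim_root db wb" and da: "0 < da" and db: "0 < db"
  shows "(\<Sum>ua<da*da. \<Sum>ub<db*db. (cmod (pt2 da db wa wb R ua ub))\<^sup>2)
       = real da * real db * (\<Sum>I<da*db. \<Sum>J<da*db. (cmod (R I J))\<^sup>2)"
proof -
  have "(\<Sum>ua<da*da. \<Sum>ub<db*db. (cmod (pt2 da db wa wb R ua ub))\<^sup>2)
     = (\<Sum>ub<db*db. \<Sum>ua<da*da. (cmod (pt da wa (\<lambda>x x'. pt db wb (\<lambda>y y'. R (x*db+y) (x'*db+y')) ub) ua))\<^sup>2)"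
    unfolding pt2_nested[OF db] by (rule sum.swap)
  also have "\<dots> = (\<Sum>ub<db*db. real da * (\<Sum>x<da. \<Sum>x'<da. (cmod (pt db wb (\<lambda>y y'. R (x*db+y) (x'*db+y')) ub))\<^sup>2))"
    by (intro sum.cong refl parseval[OF pa da])
  also have "\<dots> = real da * (\<Sum>x<da. \<Sum>x'<da. \<Sum>ub<db*db. (cmod (pt db wb (\<lambda>y y'. R (x*db+y) (x'*db+y')) ub))\<^sup>2)"
  proof -
    have "(\<Sum>ub<db*db. \<Sum>x<da. \<Sum>x'<da. (cmod (pt db wb (\<lambda>y y'. R (x*db+y) (x'*db+y')) ub))\<^sup>2)
      = (\<Sum>x<da. \<Sum>x'<da. \<Sum>ub<db*db. (cmod (pt db wb (\<lambda>y y'. R (x*db+y) (x'*db+y')) ub))\<^sup>2)"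
      by (subst sum.swap) (rule sum.cong[OF refl], rule sum.swap)
    thus ?thesis by (simp add: sum_distrib_left[symmetric])
  qed
  also have "\<dots> = real da * (\<Sum>x<da. \<Sum>x'<da. real db * (\<Sum>y<db. \<Sum>y'<db. (cmod (R (x*db+y) (x'*db+y')))\<^sup>2))"
    by (intro arg_cong[where f = "\<lambda>t. real da * t"] sum.cong refl parseval[OF pb db])
  also have "\<dots> = real da * real db * (\<Sum>x<da. \<Sum>y<db. \<Sum>x'<da. \<Sum>y'<db. (cmod (R (x*db+y) (x'*db+y')))\<^sup>2)"
    by (simp add: sum_distrib_left mult.assoc) (rule sum.cong[OF refl], rule sum.swap)
  also have "\<dots> = real da * real db * (\<Sum>I<da*db. \<Sum>J<da*db. (cmod (R I J))\<^sup>2)"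
    unfolding sum_split ..
  finally show ?thesis .
qed

lemma pt2_marg_a:
  assumes db: "0 < db"
  shows "pt2 da db wa wb R ua 0 = pt da wa (\<lambda>x x'. \<Sum>y<db. R (x*db+y) (x'*db+y)) ua"
  unfolding pt2_nested[OF db] pt_zero[OF db] ..

lemma pt2_marg_b:
  assumes da: "0 < da" and db: "0 < db"
  shows "pt2 da db wa wb R 0 ub = pt db wb (\<lambda>y y'. \<Sum>x<da. R (x*db+y) (x*db+y')) ub"
  unfolding pt2_nested[OF db] pt_zero[OF da] pt_sum ..

lemma pt2_00:
  assumes da: "0 < da" and db: "0 < db"
  shows "pt2 da db wa wb R 0 0 = (\<Sum>I<da*db. R I I)"
  unfolding pt2_marg_a[OF db] pt_zero[OF da] sum_split ..

lemma sum_shift1: "0 < N \<Longrightarrow> (\<Sum>r<N-1. F (Suc r)) = (\<Sum>u<N. F u) - (F 0 :: real)"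
  by (cases N) (simp_all only: sum.lessThan_Suc_shift, simp_all)

lemma density_trace: "density n R \<Longrightarrow> (\<Sum>i<n. R $$ (i,i)) = 1"
  unfolding density_def mtrace_def by auto

lemma density_purity:
  assumes "density n R"
  shows "(\<Sum>i<n. \<Sum>j<n. (cmod (R $$ (i,j)))\<^sup>2) \<le> 1"
proof -
  obtain h where R: "\<forall>i<n. \<forall>j<n. R $$ (i,j) = (\<Sum>k<n. h k i * cnj (h k j))"
    and N: "(\<Sum>k<n. \<Sum>i<n. (cmod (h k i))\<^sup>2) = 1" using density_factor[OF assms] by blast
  have "(\<Sum>i<n. \<Sum>j<n. (cmod (R $$ (i,j)))\<^sup>2) = (\<Sum>i<n. \<Sum>j<n. (cmod (\<Sum>k<n. h k i * cnj (h k j)))\<^sup>2)"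
    using R by (intro sum.cong refl) auto
  also have "\<dots> \<le> (\<Sum>k<n. \<Sum>i<n. (cmod (h k i))\<^sup>2)\<^sup>2" by (rule gram_bound)
  finally show ?thesis using N by simp
qed

lemma sigma_bound:
  assumes pr: "prim_root d w" and d0: "0 < d" and dens: "density d \<sigma>"
  shows "(\<Sum>r<d*d-1. (cmod (pt d w (\<lambda>i j. \<sigma> $$ (i,j)) (Suc r)))\<^sup>2) \<le> real d - 1"
proof -
  have "(\<Sum>r<d*d-1. (cmod (pt d w (\<lambda>i j. \<sigma> $$ (i,j)) (Suc r)))\<^sup>2)
      = (\<Sum>u<d*d. (cmod (pt d w (\<lambda>i j. \<sigma> $$ (i,j)) u))\<^sup>2) - (cmod (pt d w (\<lambda>i j. \<sigma> $$ (i,j)) 0))\<^sup>2"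
    using d0 by (intro sum_shift1) simp
  also have "pt d w (\<lambda>i j. \<sigma> $$ (i,j)) 0 = 1" unfolding pt_zero[OF d0] using density_trace[OF dens] .
  also have "(\<Sum>u<d*d. (cmod (pt d w (\<lambda>i j. \<sigma> $$ (i,j)) u))\<^sup>2) = real d * (\<Sum>m<d. \<Sum>n<d. (cmod (\<sigma> $$ (m,n)))\<^sup>2)"
    by (rule parseval[OF pr d0])
  also have "\<dots> \<le> real d * 1" by (intro mult_left_mono density_purity[OF dens]) simp
  finally show ?thesis by simp
qed

lemma final_arith:
  fixes da db T Pa Pb :: real
  assumes da: "da \<ge> 2" and db: "db \<ge> 2" and T0: "0 \<le> T" and T1: "T \<le> 1"
    and Ta: "T \<le> db * Pa" and Tb: "T \<le> da * Pb"
  shows "da * db * T - da * Pa - db * Pb + 1 \<le> da * db * (1 - 1 / da\<^sup>2 - 1 / db\<^sup>2) + 1"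
proof -
  have "T * (da / db) \<le> (db * Pa) * (da / db)" by (rule mult_right_mono[OF Ta]) (use da db in auto)
  hence "da * Pa \<ge> T * (da / db)" using db by (simp add: mult.commute)
  moreover have "T * (db / da) \<le> (da * Pb) * (db / da)" by (rule mult_right_mono[OF Tb]) (use da db in auto)
  hence "db * Pb \<ge> T * (db / da)" using da by (simp add: mult.commute)
  ultimately have "da * db * T - da * Pa - db * Pb + 1 \<le> T * (da * db - da / db - db / da) + 1"
    by (simp add: algebra_simps)
  also have "\<dots> \<le> 1 * (da * db - da / db - db / da) + 1"
  proof -
    have "da / db \<le> da / 2" using da db by (intro divide_left_mono) auto
    moreover have "db / da \<le> db / 2" using da db by (intro divide_left_mono) auto
    moreover have "da + db \<le> da * db"
    proof -
      have "(da - 1) * (db - 1) \<ge> 1 * 1" using da db by (intro mult_mono) auto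
      thus ?thesis by (simp add: algebra_simps)
    qed
    ultimately have "0 \<le> da * db - da / db - db / da" using da db by linarith
    thus ?thesis using T1 by (intro add_right_mono mult_right_mono) auto
  qed
  also have "\<dots> = da * db * (1 - 1 / da\<^sup>2 - 1 / db\<^sup>2) + 1"
    using da db by (simp add: field_simps power2_eq_square)
  finally show ?thesis .
qed

lemma tau_bounds:
  assumes pa: "prim_root da wa" and pb: "prim_root db wb" and da: "2 \<le> da" and db: "2 \<le> db"
    and dens: "density (da*db) \<tau>"
  defines "Y \<equiv> pt2 da db wa wb (\<lambda>I J. \<tau> $$ (I,J))"
  shows "(\<Sum>r<da*da-1. (cmod (Y (Suc r) 0))\<^sup>2) \<le> real da - 1"
    and "(\<Sum>r<db*db-1. (cmod (Y 0 (Suc r)))\<^sup>2) \<le> real db - 1"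
    and "(\<Sum>r<da*da-1. \<Sum>q<db*db-1. (cmod (Y (Suc r) (Suc q)))\<^sup>2)
          \<le> real da * real db * (1 - 1 / (real da)\<^sup>2 - 1 / (real db)\<^sup>2) + 1"
proof -
  have da0: "0 < da" and db0: "0 < db" using da db by auto
  define n where "n = da * db"
  define R where "R I J = \<tau> $$ (I,J)" for I J
  obtain h where Rh: "\<forall>i<n. \<forall>j<n. \<tau> $$ (i,j) = (\<Sum>k<n. h k i * cnj (h k j))"
    and N: "(\<Sum>k<n. \<Sum>i<n. (cmod (h k i))\<^sup>2) = 1" using density_factor[OF dens] unfolding n_def by blast
  define R' where "R' I J = (\<Sum>k<n. h k I * cnj (h k J))" for I J
  define T where "T = (\<Sum>I<n. \<Sum>J<n. (cmod (R I J))\<^sup>2)"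
  define Pa where "Pa = (\<Sum>x<da. \<Sum>x'<da. (cmod (\<Sum>y<db. R (x*db+y) (x'*db+y)))\<^sup>2)"
  define Pb where "Pb = (\<Sum>y<db. \<Sum>y'<db. (cmod (\<Sum>x<da. R (x*db+y) (x*db+y')))\<^sup>2)"
  have RR: "R I J = R' I J" if "I < n" "J < n" for I J using Rh that unfolding R_def R'_def by auto
  have lt: "x*db+y < n" if "x < da" "y < db" for x y
  proof -
    have "x*db+y < x*db + db" using that by simp
    also have "\<dots> = (x+1)*db" by simp
    also have "\<dots> \<le> da*db" using that by (intro mult_right_mono) auto
    finally show ?thesis unfolding n_def .
  qed
  have T': "T = (\<Sum>I<n. \<Sum>J<n. (cmod (R' I J))\<^sup>2)" unfolding T_def using RR by (intro sum.cong refl) auto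
  have Pa': "Pa = (\<Sum>x<da. \<Sum>x'<da. (cmod (\<Sum>y<db. R' (x*db+y) (x'*db+y)))\<^sup>2)"
    unfolding Pa_def using RR lt by (intro sum.cong refl) auto
  have Pb': "Pb = (\<Sum>y<db. \<Sum>y'<db. (cmod (\<Sum>x<da. R' (x*db+y) (x*db+y')))\<^sup>2)"
    unfolding Pb_def using RR lt by (intro sum.cong refl) auto
  have splA: "(\<Sum>I<n. F I) = (\<Sum>x<da. \<Sum>y<db. F (x*db+y))" for F :: "nat \<Rightarrow> 'a::comm_monoid_add"
    unfolding n_def by (rule sum_split)
  have splB: "(\<Sum>I<n. F I) = (\<Sum>y<db. \<Sum>x<da. F (x*db+y))" for F :: "nat \<Rightarrow> 'a::comm_monoid_add"
    unfolding splA by (rule sum.swap)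
  have A: "T \<le> real db * Pa" "Pa \<le> 1"
    using purity_abstract[where n=n and A=da and B=db and \<phi>="\<lambda>x y. x*db+y" and R=R' and K=n and h=h, OF splA splA] N R'_def
    unfolding T' Pa' by (auto simp: n_def)
  have B: "T \<le> real da * Pb" "Pb \<le> 1"
    using purity_abstract[where n=n and A=db and B=da and \<phi>="\<lambda>y x. x*db+y" and R=R' and K=n and h=h, OF splB splB] N R'_def
    unfolding T' Pb' by (auto simp: n_def)
  have T1: "T \<le> 1" unfolding T' R'_def using gram_bound[of h "{..<n}" "{..<n}"] N by simp
  have T0: "0 \<le> T" unfolding T_def by (intro sum_nonneg) auto
  have Y00: "Y 0 0 = 1" unfolding Y_def pt2_00[OF da0 db0] using density_trace[OF dens] .
  have SA: "(\<Sum>ua<da*da. (cmod (Y ua 0))\<^sup>2) = real da * Pa"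
    unfolding Y_def pt2_marg_a[OF db0] Pa_def R_def by (rule parseval[OF pa da0])
  have SB: "(\<Sum>ub<db*db. (cmod (Y 0 ub))\<^sup>2) = real db * Pb"
    unfolding Y_def pt2_marg_b[OF da0 db0] Pb_def R_def by (rule parseval[OF pb db0])
  have ST: "(\<Sum>ua<da*da. \<Sum>ub<db*db. (cmod (Y ua ub))\<^sup>2) = real da * real db * T"
    unfolding Y_def T_def R_def n_def by (rule parseval2[OF pa pb da0 db0])
  show "(\<Sum>r<da*da-1. (cmod (Y (Suc r) 0))\<^sup>2) \<le> real da - 1"
  proof -
    have "(\<Sum>r<da*da-1. (cmod (Y (Suc r) 0))\<^sup>2) = real da * Pa - 1"
      using sum_shift1[of "da*da" "\<lambda>u. (cmod (Y u 0))\<^sup>2"] da0 SA Y00 by simp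
    thus ?thesis using A(2) da0 by (simp add: mult_left_le)
  qed
  show "(\<Sum>r<db*db-1. (cmod (Y 0 (Suc r)))\<^sup>2) \<le> real db - 1"
  proof -
    have "(\<Sum>r<db*db-1. (cmod (Y 0 (Suc r)))\<^sup>2) = real db * Pb - 1"
      using sum_shift1[of "db*db" "\<lambda>u. (cmod (Y 0 u))\<^sup>2"] db0 SB Y00 by simp
    thus ?thesis using B(2) db0 by (simp add: mult_left_le)
  qed
  have "(\<Sum>r<da*da-1. \<Sum>q<db*db-1. (cmod (Y (Suc r) (Suc q)))\<^sup>2)
      = (\<Sum>r<da*da-1. (\<Sum>ub<db*db. (cmod (Y (Suc r) ub))\<^sup>2) - (cmod (Y (Suc r) 0))\<^sup>2)"
    using db0 by (intro sum.cong refl sum_shift1) simp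
  also have "\<dots> = (\<Sum>r<da*da-1. \<Sum>ub<db*db. (cmod (Y (Suc r) ub))\<^sup>2) - (\<Sum>r<da*da-1. (cmod (Y (Suc r) 0))\<^sup>2)"
    by (rule sum_subtractf)
  also have "(\<Sum>r<da*da-1. \<Sum>ub<db*db. (cmod (Y (Suc r) ub))\<^sup>2)
      = (\<Sum>ua<da*da. \<Sum>ub<db*db. (cmod (Y ua ub))\<^sup>2) - (\<Sum>ub<db*db. (cmod (Y 0 ub))\<^sup>2)"
    using da0 by (intro sum_shift1) simp
  also have "(\<Sum>r<da*da-1. (cmod (Y (Suc r) 0))\<^sup>2) = real da * Pa - 1"
    using sum_shift1[of "da*da" "\<lambda>u. (cmod (Y u 0))\<^sup>2"] da0 SA Y00 by simp
  finally have "(\<Sum>r<da*da-1. \<Sum>q<db*db-1. (cmod (Y (Suc r) (Suc q)))\<^sup>2)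
      = real da * real db * T - real da * Pa - real db * Pb + 1" using ST SB by simp
  also have "\<dots> \<le> real da * real db * (1 - 1 / (real da)\<^sup>2 - 1 / (real db)\<^sup>2) + 1"
    by (rule final_arith) (use da db T0 T1 A B in auto)
  finally show "(\<Sum>r<da*da-1. \<Sum>q<db*db-1. (cmod (Y (Suc r) (Suc q)))\<^sup>2)
          \<le> real da * real db * (1 - 1 / (real da)\<^sup>2 - 1 / (real db)\<^sup>2) + 1" .
qed

lemma mtrace_adj:
  assumes "E \<in> carrier_mat D D" "K \<in> carrier_mat D D"
  shows "mtrace (E * adj K) = (\<Sum>i<D. \<Sum>j<D. E $$ (i,j) * cnj (K $$ (i,j)))"
  unfolding mtrace_def using assms
  by (auto simp: adj_def scalar_prod_def atLeast0LessThan intro!: sum.cong)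

lemma pauli_carrier: "pauli d w u \<in> carrier_mat d d"
  unfolding pauli_def by auto

lemma coord_split:
  assumes d1: "0 < d 1" and d2: "0 < d 2" and d3: "0 < d 3"
  shows "(\<Sum>i<totdim d. G (coord d i 1) (coord d i 2) (coord d i 3))
       = (\<Sum>x1<d 1. \<Sum>x2<d 2. \<Sum>x3<d 3. G x1 x2 x3)"
proof -
  have "(\<Sum>i<totdim d. G (coord d i 1) (coord d i 2) (coord d i 3))
     = (\<Sum>x1<d 1. \<Sum>x2<d 2. \<Sum>x3<d 3. G (coord d ((x1 * d 2 + x2) * d 3 + x3) 1)
          (coord d ((x1 * d 2 + x2) * d 3 + x3) 2) (coord d ((x1 * d 2 + x2) * d 3 + x3) 3))"
    unfolding totdim_def sum_split ..
  also have "\<dots> = (\<Sum>x1<d 1. \<Sum>x2<d 2. \<Sum>x3<d 3. G x1 x2 x3)"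
  proof (intro sum.cong refl)
    fix x1 x2 x3 assume x: "x1 \<in> {..<d 1}" "x2 \<in> {..<d 2}" "x3 \<in> {..<d 3}"
    define i where "i = (x1 * d 2 + x2) * d 3 + x3"
    have q3: "i div d 3 = x1 * d 2 + x2" "i mod d 3 = x3" unfolding i_def using x by auto
    have "coord d i 1 = i div d 3 div d 2" unfolding coord_def by (simp add: div_mult2_eq[symmetric] mult.commute)
    hence c1: "coord d i 1 = x1" using q3 x by simp
    have c2: "coord d i 2 = x2" unfolding coord_def using q3 x by simp
    have c3: "coord d i 3 = x3" unfolding coord_def using q3 x by simp
    show "G (coord d ((x1 * d 2 + x2) * d 3 + x3) 1) (coord d ((x1 * d 2 + x2) * d 3 + x3) 2)
        (coord d ((x1 * d 2 + x2) * d 3 + x3) 3) = G x1 x2 x3"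
      using c1 c2 c3 unfolding i_def by simp
  qed
  finally show ?thesis .
qed

lemma perm_cases:
  assumes "{f, a, b} = {1, 2, 3::nat}" "a < b"
  shows "(f = 1 \<and> a = 2 \<and> b = 3) \<or> (f = 2 \<and> a = 1 \<and> b = 3) \<or> (f = 3 \<and> a = 1 \<and> b = 2)"
proof -
  have m: "f \<in> {1,2,3}" "a \<in> {1,2,3}" "b \<in> {1,2,3}" "1 \<in> {f,a,b}" "2 \<in> {f,a,b}" "3 \<in> {f,a,b}"
    using assms(1) by blast+
  from m(1) have "f = 1 \<or> f = 2 \<or> f = 3" by simp
  moreover from m(2) have "a = 1 \<or> a = 2 \<or> a = 3" by simp
  moreover from m(3) have "b = 1 \<or> b = 2 \<or> b = 3" by simp
  moreover from m(4) have "f = 1 \<or> a = 1 \<or> b = 1" by auto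
  moreover from m(5) have "f = 2 \<or> a = 2 \<or> b = 2" by auto
  moreover from m(6) have "f = 3 \<or> a = 3 \<or> b = 3" by auto
  ultimately show ?thesis using assms(2) by linarith
qed

lemma trip_perm:
  assumes d1: "0 < d 1" and d2: "0 < d 2" and d3: "0 < d 3"
    and p: "{f, a, b} = {1, 2, 3::nat}" "a < b"
  shows "(\<Sum>i<totdim d. G (coord d i f) (coord d i a) (coord d i b))
       = (\<Sum>x<d f. \<Sum>y<d a. \<Sum>z<d b. G x y z)"
  using perm_cases[OF p]
proof (elim disjE conjE)
  assume "f = 1" "a = 2" "b = 3"
  thus ?thesis using coord_split[OF d1 d2 d3, of G] by simp
next
  assume fab: "f = 2" "a = 1" "b = 3"
  have "(\<Sum>i<totdim d. G (coord d i 2) (coord d i 1) (coord d i 3))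
      = (\<Sum>x1<d 1. \<Sum>x2<d 2. \<Sum>x3<d 3. G x2 x1 x3)"
    using coord_split[OF d1 d2 d3, of "\<lambda>x1 x2 x3. G x2 x1 x3"] by simp
  also have "\<dots> = (\<Sum>x2<d 2. \<Sum>x1<d 1. \<Sum>x3<d 3. G x2 x1 x3)" by (rule sum.swap)
  finally show ?thesis using fab by simp
next
  assume fab: "f = 3" "a = 1" "b = 2"
  have "(\<Sum>i<totdim d. G (coord d i 3) (coord d i 1) (coord d i 2))
      = (\<Sum>x1<d 1. \<Sum>x2<d 2. \<Sum>x3<d 3. G x3 x1 x2)"
    using coord_split[OF d1 d2 d3, of "\<lambda>x1 x2 x3. G x3 x1 x2"] by simp
  also have "\<dots> = (\<Sum>x1<d 1. \<Sum>x3<d 3. \<Sum>x2<d 2. G x3 x1 x2)" by (rule sum.cong[OF refl], rule sum.swap)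
  also have "\<dots> = (\<Sum>x3<d 3. \<Sum>x1<d 1. \<Sum>x2<d 2. G x3 x1 x2)" by (rule sum.swap)
  finally show ?thesis using fab by simp
qed

lemma kron3_entry:
  assumes d1: "0 < d 1" and d2: "0 < d 2" and d3: "0 < d 3"
    and i: "i < totdim d" and j: "j < totdim d"
  shows "kron (kron (pauli (d 1) w1 u1) (pauli (d 2) w2 u2)) (pauli (d 3) w3 u3) $$ (i,j)
    = pauli (d 1) w1 u1 $$ (coord d i 1, coord d j 1) * pauli (d 2) w2 u2 $$ (coord d i 2, coord d j 2)
      * pauli (d 3) w3 u3 $$ (coord d i 3, coord d j 3)"
proof -
  let ?P1 = "pauli (d 1) w1 u1" and ?P2 = "pauli (d 2) w2 u2" and ?P3 = "pauli (d 3) w3 u3"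
  have c1: "?P1 \<in> carrier_mat (d 1) (d 1)" and c2: "?P2 \<in> carrier_mat (d 2) (d 2)"
    and c3: "?P3 \<in> carrier_mat (d 3) (d 3)" by (rule pauli_carrier)+
  have i3: "i div d 3 < d 1 * d 2" "j div d 3 < d 1 * d 2"
    using i j unfolding totdim_def by (auto intro: less_mult_imp_div_less)
  have "kron (kron ?P1 ?P2) ?P3 $$ (i,j) = kron ?P1 ?P2 $$ (i div d 3, j div d 3) * ?P3 $$ (i mod d 3, j mod d 3)"
    unfolding kron_def[of "kron ?P1 ?P2" ?P3] using i j c1 c2 c3
    by (simp add: kron_def totdim_def)
  also have "kron ?P1 ?P2 $$ (i div d 3, j div d 3) = ?P1 $$ (i div d 3 div d 2, j div d 3 div d 2)
      * ?P2 $$ (i div d 3 mod d 2, j div d 3 mod d 2)"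
    unfolding kron_def[of ?P1 ?P2] using i3 c1 c2 by simp
  also have "i div d 3 div d 2 = coord d i 1" unfolding coord_def by (simp add: div_mult2_eq[symmetric] mult.commute)
  also have "j div d 3 div d 2 = coord d j 1" unfolding coord_def by (simp add: div_mult2_eq[symmetric] mult.commute)
  finally show ?thesis unfolding coord_def by simp
qed

lemma pt2_expand4:
  assumes db: "0 < db"
  shows "pt2 da db wa wb R ua ub = (\<Sum>x<da. \<Sum>y<db. \<Sum>x'<da. \<Sum>y'<db. R (x*db+y) (x'*db+y') *
     cnj (pauli da wa ua $$ (x, x') * pauli db wb ub $$ (y, y')))"
  unfolding pt2_def sum_split using db by (intro sum.cong refl) auto

lemma six_factor:
  fixes A :: "nat \<Rightarrow> nat \<Rightarrow> complex"
  shows "(\<Sum>x\<in>X. \<Sum>p\<in>Pp. \<Sum>q\<in>Q. \<Sum>x'\<in>X. \<Sum>p'\<in>Pp. \<Sum>q'\<in>Q. A x x' * B p q p' q')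
   = (\<Sum>x\<in>X. \<Sum>x'\<in>X. A x x') * (\<Sum>p\<in>Pp. \<Sum>q\<in>Q. \<Sum>p'\<in>Pp. \<Sum>q'\<in>Q. B p q p' q')"
proof -
  define C where "C p q = (\<Sum>p'\<in>Pp. \<Sum>q'\<in>Q. B p q p' q')" for p q
  have "(\<Sum>x\<in>X. \<Sum>p\<in>Pp. \<Sum>q\<in>Q. \<Sum>x'\<in>X. \<Sum>p'\<in>Pp. \<Sum>q'\<in>Q. A x x' * B p q p' q')
      = (\<Sum>x\<in>X. \<Sum>p\<in>Pp. \<Sum>q\<in>Q. \<Sum>x'\<in>X. A x x' * C p q)"
    unfolding C_def by (simp add: sum_distrib_left)
  also have "\<dots> = (\<Sum>x\<in>X. \<Sum>x'\<in>X. \<Sum>p\<in>Pp. \<Sum>q\<in>Q. A x x' * C p q)"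
  proof (rule sum.cong[OF refl])
    fix x
    have "(\<Sum>p\<in>Pp. \<Sum>q\<in>Q. \<Sum>x'\<in>X. A x x' * C p q) = (\<Sum>p\<in>Pp. \<Sum>x'\<in>X. \<Sum>q\<in>Q. A x x' * C p q)"
      by (rule sum.cong[OF refl], rule sum.swap)
    also have "\<dots> = (\<Sum>x'\<in>X. \<Sum>p\<in>Pp. \<Sum>q\<in>Q. A x x' * C p q)" by (rule sum.swap)
    finally show "(\<Sum>p\<in>Pp. \<Sum>q\<in>Q. \<Sum>x'\<in>X. A x x' * C p q) = (\<Sum>x'\<in>X. \<Sum>p\<in>Pp. \<Sum>q\<in>Q. A x x' * C p q)" .
  qed
  also have "\<dots> = (\<Sum>x\<in>X. \<Sum>x'\<in>X. A x x' * (\<Sum>p\<in>Pp. \<Sum>q\<in>Q. C p q))"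
    by (simp only: sum_distrib_left)
  also have "\<dots> = (\<Sum>x\<in>X. \<Sum>x'\<in>X. A x x') * (\<Sum>p\<in>Pp. \<Sum>q\<in>Q. C p q)"
    by (simp only: sum_distrib_right)
  finally show ?thesis unfolding C_def .
qed

lemma perm_min_max:
  assumes "{f, g, h} = {1, 2, 3::nat}"
  shows "{f, min g h, max g h} = {1, 2, 3::nat}" "min g h < max g h"
proof -
  have "g \<noteq> h"
  proof
    assume "g = h"
    hence "{f, g, h} = {f, g}" by simp
    hence "card {1, 2, 3::nat} \<le> 2" using assms by (metis card_2_iff card_insert_le card.empty
          card_insert_disjoint finite.emptyI finite_insert insert_absorb2 le_SucI one_add_one
          Suc_1 card_le_Suc0_iff_eq)
    thus False by simp
  qed
  hence "{min g h, max g h} = {g, h}" by (auto simp: min_def max_def)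
  thus "{f, min g h, max g h} = {1, 2, 3::nat}" using assms by (metis insert_commute)
  show "min g h < max g h" using \<open>g \<noteq> h\<close> by (auto simp: min_def max_def)
qed

lemma embed_trace:
  assumes d1: "0 < d 1" and d2: "0 < d 2" and d3: "0 < d 3"
    and perm: "{f, g, h} = {1, 2, 3::nat}"
  shows "mtrace (embed_prod d f g h \<sigma> \<tau> * adj (kron (kron (pauli (d 1) (w 1) (u 1)) (pauli (d 2) (w 2) (u 2))) (pauli (d 3) (w 3) (u 3))))
    = pt (d f) (w f) (\<lambda>i j. \<sigma> $$ (i,j)) (u f) *
      pt2 (d (min g h)) (d (max g h)) (w (min g h)) (w (max g h)) (\<lambda>I J. \<tau> $$ (I,J)) (u (min g h)) (u (max g h))"
proof -
  define a where "a = min g h"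
  define b where "b = max g h"
  have fab: "{f, a, b} = {1, 2, 3::nat}" "a < b" unfolding a_def b_def using perm_min_max[OF perm] by auto
  define P where "P k = pauli (d k) (w k) (u k)" for k
  define K where "K = kron (kron (P 1) (P 2)) (P 3)"
  define E where "E = embed_prod d f g h \<sigma> \<tau>"
  define D where "D = totdim d"
  have E: "E \<in> carrier_mat D D" unfolding E_def embed_prod_def D_def Let_def by auto
  have K: "K \<in> carrier_mat D D" unfolding K_def kron_def D_def totdim_def P_def pauli_def by auto
  have db: "0 < d b" and df: "0 < d f" and da: "0 < d a"
    using fab d1 d2 d3 perm_cases[OF fab] by auto
  define A where "A x x' = \<sigma> $$ (x, x') * cnj (P f $$ (x, x'))" for x x'
  define B where "B p q p' q' = \<tau> $$ (p * d b + q, p' * d b + q') * cnj (P a $$ (p, p') * P b $$ (q, q'))" for p q p' q'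
  have entry: "E $$ (i,j) * cnj (K $$ (i,j)) =
      A (coord d i f) (coord d j f) * B (coord d i a) (coord d i b) (coord d j a) (coord d j b)"
    if "i < D" "j < D" for i j
  proof -
    have Ee: "E $$ (i,j) = \<sigma> $$ (coord d i f, coord d j f) *
        \<tau> $$ (coord d i a * d b + coord d i b, coord d j a * d b + coord d j b)"
      unfolding E_def embed_prod_def Let_def a_def[symmetric] b_def[symmetric] using that D_def by simp
    have Ke: "K $$ (i,j) = P 1 $$ (coord d i 1, coord d j 1) * P 2 $$ (coord d i 2, coord d j 2)
        * P 3 $$ (coord d i 3, coord d j 3)"
      unfolding K_def P_def by (rule kron3_entry[OF d1 d2 d3]) (use that D_def in auto)
    also have "\<dots> = P f $$ (coord d i f, coord d j f) * (P a $$ (coord d i a, coord d j a) * P b $$ (coord d i b, coord d j b))"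
      using perm_cases[OF fab] by (elim disjE conjE) (simp_all add: mult_ac)
    finally show ?thesis unfolding Ee A_def B_def by (simp add: mult_ac)
  qed
  have "mtrace (E * adj K) = (\<Sum>i<D. \<Sum>j<D. E $$ (i,j) * cnj (K $$ (i,j)))"
    by (rule mtrace_adj[OF E K])
  also have "\<dots> = (\<Sum>i<D. \<Sum>j<D. A (coord d i f) (coord d j f) * B (coord d i a) (coord d i b) (coord d j a) (coord d j b))"
    using entry by (intro sum.cong refl) auto
  also have "\<dots> = (\<Sum>i<D. \<Sum>x'<d f. \<Sum>p'<d a. \<Sum>q'<d b. A (coord d i f) x' * B (coord d i a) (coord d i b) p' q')"
    unfolding D_def by (rule sum.cong[OF refl], rule trip_perm[OF d1 d2 d3 fab])
  also have "\<dots> = (\<Sum>x<d f. \<Sum>p<d a. \<Sum>q<d b. \<Sum>x'<d f. \<Sum>p'<d a. \<Sum>q'<d b. A x x' * B p q p' q')"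
    unfolding D_def by (rule trip_perm[OF d1 d2 d3 fab])
  also have "\<dots> = (\<Sum>x<d f. \<Sum>x'<d f. A x x') * (\<Sum>p<d a. \<Sum>q<d b. \<Sum>p'<d a. \<Sum>q'<d b. B p q p' q')"
    by (rule six_factor)
  also have "(\<Sum>x<d f. \<Sum>x'<d f. A x x') = pt (d f) (w f) (\<lambda>i j. \<sigma> $$ (i,j)) (u f)"
    unfolding A_def pt_def P_def ..
  also have "(\<Sum>p<d a. \<Sum>q<d b. \<Sum>p'<d a. \<Sum>q'<d b. B p q p' q')
      = pt2 (d a) (d b) (w a) (w b) (\<lambda>I J. \<tau> $$ (I,J)) (u a) (u b)"
    unfolding B_def pt2_expand4[OF db] P_def ..
  finally show ?thesis unfolding E_def K_def P_def a_def b_def .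
qed

lemma minkowski:
  fixes a b :: "nat \<Rightarrow> complex"
  shows "sqrt (\<Sum>c\<in>S. (cmod (a c + b c))\<^sup>2) \<le> sqrt (\<Sum>c\<in>S. (cmod (a c))\<^sup>2) + sqrt (\<Sum>c\<in>S. (cmod (b c))\<^sup>2)"
proof -
  define A where "A = (\<Sum>c\<in>S. (cmod (a c))\<^sup>2)"
  define B where "B = (\<Sum>c\<in>S. (cmod (b c))\<^sup>2)"
  have A0: "0 \<le> A" and B0: "0 \<le> B" unfolding A_def B_def by (auto intro: sum_nonneg)
  have "(\<Sum>c\<in>S. (cmod (a c + b c))\<^sup>2) \<le> (\<Sum>c\<in>S. (cmod (a c) + cmod (b c))\<^sup>2)"
    by (intro sum_mono power_mono norm_triangle_ineq) auto
  also have "\<dots> = A + 2 * (\<Sum>c\<in>S. cmod (a c) * cmod (b c)) + B"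
    unfolding A_def B_def by (simp add: power2_sum sum.distrib sum_distrib_left mult.assoc)
  also have "\<dots> \<le> A + 2 * (sqrt A * sqrt B) + B"
    using cs_sqrt[of "\<lambda>c. cmod (a c)" "\<lambda>c. cmod (b c)" S] unfolding A_def B_def by simp
  also have "\<dots> = (sqrt A + sqrt B)\<^sup>2" using A0 B0 by (simp add: power2_sum)
  finally have "sqrt (\<Sum>c\<in>S. (cmod (a c + b c))\<^sup>2) \<le> sqrt ((sqrt A + sqrt B)\<^sup>2)"
    by (rule real_sqrt_le_mono)
  also have "\<dots> = sqrt A + sqrt B" using A0 B0 by simp
  finally show ?thesis unfolding A_def B_def .
qed

lemma sqrt_scale:
  fixes z :: "nat \<Rightarrow> complex"
  shows "sqrt (\<Sum>c\<in>S. (cmod (complex_of_real t * z c))\<^sup>2) = \<bar>t\<bar> * sqrt (\<Sum>c\<in>S. (cmod (z c))\<^sup>2)"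
proof -
  have "(\<Sum>c\<in>S. (cmod (complex_of_real t * z c))\<^sup>2) = t\<^sup>2 * (\<Sum>c\<in>S. (cmod (z c))\<^sup>2)"
    by (simp add: norm_mult power_mult_distrib sum_distrib_left)
  thus ?thesis by (simp add: real_sqrt_mult)
qed

lemma assign_vals:
  assumes "{f, g, h} = {1, 2, 3::nat}"
  shows "assign f g h a b c f = a" "assign f g h a b c g = b" "assign f g h a b c h = c"
proof -
  have ne: "f \<noteq> g" "f \<noteq> h" "g \<noteq> h"
    using perm_min_max[OF assms] perm_cases[OF perm_min_max[OF assms]] by (auto simp: min_def max_def split: if_splits)
  thus "assign f g h a b c f = a" "assign f g h a b c g = b" "assign f g h a b c h = c"
    unfolding assign_def by auto
qed

lemma tcoef_sep:
  assumes d1: "0 < d 1" and d2: "0 < d 2" and d3: "0 < d 3"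
    and perm: "{f, g, h} = {1, 2, 3::nat}"
    and rho: "\<rho> = mat (totdim d) (totdim d) (\<lambda>(i, j).
               \<Sum>s<n. complex_of_real (p s) * embed_prod d f g h (\<sigma> s) (\<tau> s) $$ (i, j))"
  shows "tcoef d w \<rho> u = (\<Sum>s<n. complex_of_real (p s) * (pt (d f) (w f) (\<lambda>i j. \<sigma> s $$ (i,j)) (u f) *
      pt2 (d (min g h)) (d (max g h)) (w (min g h)) (w (max g h)) (\<lambda>I J. \<tau> s $$ (I,J)) (u (min g h)) (u (max g h))))"
proof -
  define D where "D = totdim d"
  define K where "K = kron (kron (pauli (d 1) (w 1) (u 1)) (pauli (d 2) (w 2) (u 2))) (pauli (d 3) (w 3) (u 3))"
  have K: "K \<in> carrier_mat D D" unfolding K_def kron_def D_def totdim_def pauli_def by auto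
  have R: "\<rho> \<in> carrier_mat D D" unfolding rho D_def by auto
  have E: "embed_prod d f g h (\<sigma> s) (\<tau> s) \<in> carrier_mat D D" for s
    unfolding embed_prod_def D_def Let_def by auto
  have "tcoef d w \<rho> u = mtrace (\<rho> * adj K)" unfolding tcoef_def K_def ..
  also have "\<dots> = (\<Sum>i<D. \<Sum>j<D. \<rho> $$ (i,j) * cnj (K $$ (i,j)))" by (rule mtrace_adj[OF R K])
  also have "\<dots> = (\<Sum>i<D. \<Sum>j<D. \<Sum>s<n. complex_of_real (p s) * (embed_prod d f g h (\<sigma> s) (\<tau> s) $$ (i, j) * cnj (K $$ (i,j))))"
    unfolding rho D_def by (intro sum.cong refl) (simp add: sum_distrib_right mult.assoc)
  also have "\<dots> = (\<Sum>s<n. complex_of_real (p s) * (\<Sum>i<D. \<Sum>j<D. embed_prod d f g h (\<sigma> s) (\<tau> s) $$ (i, j) * cnj (K $$ (i,j))))"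
    by (simp add: sum_distrib_left) (subst sum.swap, rule sum.cong[OF refl], rule sum.swap)
  also have "\<dots> = (\<Sum>s<n. complex_of_real (p s) * mtrace (embed_prod d f g h (\<sigma> s) (\<tau> s) * adj K))"
    using mtrace_adj[OF E K] by simp
  also have "\<dots> = (\<Sum>s<n. complex_of_real (p s) * (pt (d f) (w f) (\<lambda>i j. \<sigma> s $$ (i,j)) (u f) *
      pt2 (d (min g h)) (d (max g h)) (w (min g h)) (w (max g h)) (\<lambda>I J. \<tau> s $$ (I,J)) (u (min g h)) (u (max g h))))"
    unfolding K_def using embed_trace[OF d1 d2 d3 perm] by simp
  finally show ?thesis .
qed

theorem theorem1:
  fixes d :: "nat \<Rightarrow> nat" and w :: "nat \<Rightarrow> complex" and \<rho> :: "complex mat"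
    and f g h :: nat and \<alpha> \<beta> :: real
  assumes dims: "\<forall>s\<in>{1, 2, 3}. d s \<ge> 2"
    and roots: "\<forall>s\<in>{1, 2, 3}. prim_root (d s) (w s)"
    and dens: "density (totdim d) \<rho>"
    and perm: "{f, g, h} = {1, 2, 3}"
    and sep: "separable_bip d f g h \<rho>"
  shows "trace_norm (N_fgh d w \<rho> f g h \<alpha> \<beta>)
           \<le> sqrt (real (d f) - 1) *
              (\<bar>\<alpha>\<bar> * sqrt (real (d g) - 1) +
               \<bar>\<beta>\<bar> * sqrt (real (d g) * real (d h) *
                            (1 - 1 / real (d g) ^ 2 - 1 / real (d h) ^ 2) + 1))"
proof -
  obtain n :: nat and p :: "nat \<Rightarrow> real" and \<sigma> \<tau> :: "nat \<Rightarrow> complex mat" where sp: "\<forall>s<n. p s > 0 \<and> density (d f) (\<sigma> s) \<and> density (d g * d h) (\<tau> s)"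
    and p1: "(\<Sum>s<n. p s) = 1"
    and rho: "\<rho> = mat (totdim d) (totdim d) (\<lambda>(i, j).
               \<Sum>s<n. complex_of_real (p s) * embed_prod d f g h (\<sigma> s) (\<tau> s) $$ (i, j))"
    using sep unfolding separable_bip_def by blast
  have d1: "0 < d 1" and d2: "0 < d 2" and d3: "0 < d 3" using dims by auto
  have fin: "f \<in> {1,2,3}" "g \<in> {1,2,3}" "h \<in> {1,2,3}" using perm by blast+
  have df: "2 \<le> d f" and dg: "2 \<le> d g" and dh: "2 \<le> d h" using dims fin by blast+
  have rf: "prim_root (d f) (w f)" and rg: "prim_root (d g) (w g)" and rh: "prim_root (d h) (w h)"
    using roots fin by blast+
  have gh: "g \<noteq> h" using perm_min_max(2)[OF perm] by (auto simp: min_def max_def split: if_splits)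
  define a where "a = min g h"
  define b where "b = max g h"
  have ab_cases: "(g < h \<and> a = g \<and> b = h) \<or> (h < g \<and> a = h \<and> b = g)"
    unfolding a_def b_def using gh by (auto simp: min_def max_def)
  have da: "2 \<le> d a" and db: "2 \<le> d b" and ra: "prim_root (d a) (w a)" and rb: "prim_root (d b) (w b)"
    using ab_cases dg dh rg rh by auto
  have dab: "d a * d b = d g * d h" using ab_cases by auto
  define X where "X s v = pt (d f) (w f) (\<lambda>i j. \<sigma> s $$ (i,j)) v" for s v
  define Y where "Y s ua ub = pt2 (d a) (d b) (w a) (w b) (\<lambda>I J. \<tau> s $$ (I,J)) ua ub" for s ua ub
  define Yg where "Yg s bb cc = (if g < h then Y s bb cc else Y s cc bb)" for s bb cc
  have tc: "tcoef d w \<rho> (assign f g h aa bb cc) = (\<Sum>s<n. complex_of_real (p s) * (X s aa * Yg s bb cc))" for aa bb cc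
  proof -
    have u: "assign f g h aa bb cc f = aa" "assign f g h aa bb cc g = bb" "assign f g h aa bb cc h = cc"
      by (rule assign_vals[OF perm])+
    have ua: "assign f g h aa bb cc a = (if g < h then bb else cc)"
      and ub: "assign f g h aa bb cc b = (if g < h then cc else bb)"
      using ab_cases u(2,3) by auto
    show ?thesis unfolding tcoef_sep[OF d1 d2 d3 perm rho] a_def[symmetric] b_def[symmetric]
    proof (intro sum.cong refl arg_cong[where f = "\<lambda>t. complex_of_real (p _) * t"])
      fix s
      show "pt (d f) (w f) (\<lambda>i j. \<sigma> s $$ (i, j)) (assign f g h aa bb cc f) *
          pt2 (d a) (d b) (w a) (w b) (\<lambda>I J. \<tau> s $$ (I, J)) (assign f g h aa bb cc a) (assign f g h aa bb cc b)
          = X s aa * Yg s bb cc"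
        unfolding X_def Yg_def Y_def ua ub u(1) by simp
    qed
  qed
  define mf where "mf = d f ^ 2 - 1"
  define mg where "mg = d g ^ 2 - 1"
  define mh where "mh = d h ^ 2 - 1"
  have mh0: "0 < mh"
  proof -
    have "2*2 \<le> d h * d h" using dh by (intro mult_mono) auto
    thus ?thesis unfolding mh_def power2_eq_square by simp
  qed
  define Z where "Z s c = complex_of_real \<alpha> * (if c < mg then Yg s (c+1) 0 else 0)
      + complex_of_real \<beta> * Yg s (c div mh + 1) (c mod mh + 1)" for s c
  define NN where "NN = N_fgh d w \<rho> f g h \<alpha> \<beta>"
  have NN: "NN \<in> carrier_mat mf (mg * mh)"
    unfolding NN_def N_fgh_def S0_fg_def S_fgh_def mf_def mg_def mh_def by auto
  have Ne: "NN $$ (r,c) = (\<Sum>s<n. complex_of_real (p s) * X s (Suc r) * Z s c)" if "r < mf" "c < mg * mh" for r c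
  proof -
    have S0: "S0_fg d w \<rho> f g h $$ (r,c) = (if c < mg then tcoef d w \<rho> (assign f g h (r + 1) (c + 1) 0) else 0)"
      unfolding S0_fg_def S_fg_def using that unfolding mf_def mg_def mh_def by auto
    have S: "S_fgh d w \<rho> f g h $$ (r,c) = tcoef d w \<rho> (assign f g h (r + 1) (c div mh + 1) (c mod mh + 1))"
      unfolding S_fgh_def using that unfolding mf_def mg_def mh_def by auto
    have "NN $$ (r,c) = complex_of_real \<alpha> * S0_fg d w \<rho> f g h $$ (r,c) + complex_of_real \<beta> * S_fgh d w \<rho> f g h $$ (r,c)"
      unfolding NN_def N_fgh_def using that unfolding S0_fg_def S_fgh_def mf_def mg_def mh_def by auto
    also have "\<dots> = (\<Sum>s<n. complex_of_real (p s) * X s (Suc r) * Z s c)"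
    proof -
      define A where "A s = (if c < mg then Yg s (c+1) 0 else 0)" for s
      define B where "B s = Yg s (c div mh + 1) (c mod mh + 1)" for s
      have hA: "(if c < mg then tcoef d w \<rho> (assign f g h (r + 1) (c + 1) 0) else 0)
          = (\<Sum>s<n. complex_of_real (p s) * (X s (Suc r) * A s))"
        unfolding A_def by (cases "c < mg") (simp_all add: tc)
      have hB: "tcoef d w \<rho> (assign f g h (r + 1) (c div mh + 1) (c mod mh + 1))
          = (\<Sum>s<n. complex_of_real (p s) * (X s (Suc r) * B s))"
        unfolding B_def by (simp add: tc)
      have "complex_of_real \<alpha> * S0_fg d w \<rho> f g h $$ (r,c) + complex_of_real \<beta> * S_fgh d w \<rho> f g h $$ (r,c)
          = complex_of_real \<alpha> * (\<Sum>s<n. complex_of_real (p s) * (X s (Suc r) * A s))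
            + complex_of_real \<beta> * (\<Sum>s<n. complex_of_real (p s) * (X s (Suc r) * B s))"
        unfolding S0 S hA hB ..
      also have "\<dots> = (\<Sum>s<n. complex_of_real \<alpha> * (complex_of_real (p s) * (X s (Suc r) * A s))
            + complex_of_real \<beta> * (complex_of_real (p s) * (X s (Suc r) * B s)))"
        by (simp only: sum_distrib_left sum.distrib)
      also have "\<dots> = (\<Sum>s<n. complex_of_real (p s) * X s (Suc r) * Z s c)"
        unfolding Z_def A_def[symmetric] B_def[symmetric] by (intro sum.cong refl) (simp add: algebra_simps)
      finally show ?thesis .
    qed
    finally show ?thesis .
  qed
  have TN: "trace_norm NN \<le> (\<Sum>s<n. p s * sqrt (\<Sum>r<mf. (cmod (X s (Suc r)))\<^sup>2) * sqrt (\<Sum>c<mg * mh. (cmod (Z s c))\<^sup>2))"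
    by (rule trace_norm_bound[OF NN Ne]) (use sp in auto)
  define Bnd where "Bnd = real (d g) * real (d h) * (1 - 1 / real (d g) ^ 2 - 1 / real (d h) ^ 2) + 1"
  have bx: "sqrt (\<Sum>r<mf. (cmod (X s (Suc r)))\<^sup>2) \<le> sqrt (real (d f) - 1)" if "s < n" for s
  proof -
    have "(\<Sum>r<mf. (cmod (X s (Suc r)))\<^sup>2) \<le> real (d f) - 1"
      unfolding X_def mf_def power2_eq_square[of "d f"]
      by (rule sigma_bound[OF rf]) (use df sp that in auto)
    thus ?thesis by (rule real_sqrt_le_mono)
  qed
  have bz: "sqrt (\<Sum>c<mg * mh. (cmod (Z s c))\<^sup>2) \<le> \<bar>\<alpha>\<bar> * sqrt (real (d g) - 1) + \<bar>\<beta>\<bar> * sqrt Bnd" if "s < n" for s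
  proof -
    have tau: "density (d a * d b) (\<tau> s)" using sp that dab by auto
    note tb = tau_bounds[OF ra rb da db tau]
    have Y1: "(\<Sum>c<mg. (cmod (Yg s (c+1) 0))\<^sup>2) \<le> real (d g) - 1"
      using ab_cases
    proof (elim disjE conjE)
      assume "g < h" "a = g" "b = h"
      thus ?thesis using tb(1) unfolding Yg_def Y_def mg_def power2_eq_square by simp
    next
      assume "h < g" "a = h" "b = g"
      thus ?thesis using tb(2) unfolding Yg_def Y_def mg_def power2_eq_square by simp
    qed
    have Y2: "(\<Sum>x<mg. \<Sum>y<mh. (cmod (Yg s (x+1) (y+1)))\<^sup>2) \<le> Bnd"
      using ab_cases
    proof (elim disjE conjE)
      assume "g < h" "a = g" "b = h"
      thus ?thesis using tb(3) unfolding Yg_def Y_def mg_def mh_def Bnd_def power2_eq_square by simp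
    next
      assume hg: "h < g" "a = h" "b = g"
      have "(\<Sum>x<mg. \<Sum>y<mh. (cmod (Yg s (x+1) (y+1)))\<^sup>2) = (\<Sum>y<mh. \<Sum>x<mg. (cmod (Y s (y+1) (x+1)))\<^sup>2)"
      proof -
        have ng: "\<not> g < h" using hg by simp
        have "(\<Sum>x<mg. \<Sum>y<mh. (cmod (Yg s (x+1) (y+1)))\<^sup>2) = (\<Sum>x<mg. \<Sum>y<mh. (cmod (Y s (y+1) (x+1)))\<^sup>2)"
          unfolding Yg_def using ng by simp
        also have "\<dots> = (\<Sum>y<mh. \<Sum>x<mg. (cmod (Y s (y+1) (x+1)))\<^sup>2)" by (rule sum.swap)
        finally show ?thesis .
      qed
      also have "\<dots> \<le> real (d h) * real (d g) * (1 - 1 / (real (d h))\<^sup>2 - 1 / (real (d g))\<^sup>2) + 1"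
        using tb(3) hg unfolding Y_def mg_def mh_def power2_eq_square by simp
      also have "\<dots> = Bnd" unfolding Bnd_def by (simp add: algebra_simps)
      finally show ?thesis .
    qed
    have "sqrt (\<Sum>c<mg * mh. (cmod (Z s c))\<^sup>2)
        \<le> sqrt (\<Sum>c<mg * mh. (cmod (complex_of_real \<alpha> * (if c < mg then Yg s (c+1) 0 else 0)))\<^sup>2)
          + sqrt (\<Sum>c<mg * mh. (cmod (complex_of_real \<beta> * Yg s (c div mh + 1) (c mod mh + 1)))\<^sup>2)"
      unfolding Z_def by (rule minkowski)
    also have "\<dots> = \<bar>\<alpha>\<bar> * sqrt (\<Sum>c<mg * mh. (cmod (if c < mg then Yg s (c+1) 0 else 0))\<^sup>2)
          + \<bar>\<beta>\<bar> * sqrt (\<Sum>c<mg * mh. (cmod (Yg s (c div mh + 1) (c mod mh + 1)))\<^sup>2)"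
      by (simp only: sqrt_scale)
    also have "(\<Sum>c<mg * mh. (cmod (if c < mg then Yg s (c+1) 0 else 0))\<^sup>2) = (\<Sum>c<mg. (cmod (Yg s (c+1) 0))\<^sup>2)"
    proof -
      have "(\<Sum>c<mg * mh. (cmod (if c < mg then Yg s (c+1) 0 else 0))\<^sup>2)
          = (\<Sum>c\<in>{..<mg * mh}. if c \<in> {..<mg} then (cmod (Yg s (c+1) 0))\<^sup>2 else 0)"
        by (intro sum.cong refl) auto
      also have "\<dots> = (\<Sum>c\<in>{..<mg * mh} \<inter> {..<mg}. (cmod (Yg s (c+1) 0))\<^sup>2)"
        by (rule sum.inter_restrict[symmetric]) simp
      also have "{..<mg * mh} \<inter> {..<mg} = {..<mg}"
      proof -
        have le: "mg \<le> mg * mh" using mh0 by simp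
        show ?thesis by (rule Int_absorb1, simp only: lessThan_subset_iff, rule le)
      qed
      finally show ?thesis .
    qed
    also have "(\<Sum>c<mg * mh. (cmod (Yg s (c div mh + 1) (c mod mh + 1)))\<^sup>2)
        = (\<Sum>x<mg. \<Sum>y<mh. (cmod (Yg s (x+1) (y+1)))\<^sup>2)"
      unfolding sum_split using mh0 by (intro sum.cong refl) auto
    also have "\<bar>\<alpha>\<bar> * sqrt (\<Sum>c<mg. (cmod (Yg s (c+1) 0))\<^sup>2) + \<bar>\<beta>\<bar> * sqrt (\<Sum>x<mg. \<Sum>y<mh. (cmod (Yg s (x+1) (y+1)))\<^sup>2)
        \<le> \<bar>\<alpha>\<bar> * sqrt (real (d g) - 1) + \<bar>\<beta>\<bar> * sqrt Bnd"
      by (intro add_mono mult_left_mono real_sqrt_le_mono Y1 Y2) auto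
    finally show ?thesis .
  qed
  have "trace_norm NN \<le> (\<Sum>s<n. p s * (sqrt (real (d f) - 1) * (\<bar>\<alpha>\<bar> * sqrt (real (d g) - 1) + \<bar>\<beta>\<bar> * sqrt Bnd)))"
  proof (rule order_trans[OF TN], intro sum_mono)
    fix s assume "s \<in> {..<n}"
    hence s: "s < n" by simp
    have "p s * sqrt (\<Sum>r<mf. (cmod (X s (Suc r)))\<^sup>2) * sqrt (\<Sum>c<mg * mh. (cmod (Z s c))\<^sup>2)
        = p s * (sqrt (\<Sum>r<mf. (cmod (X s (Suc r)))\<^sup>2) * sqrt (\<Sum>c<mg * mh. (cmod (Z s c))\<^sup>2))" by simp
    also have "\<dots> \<le> p s * (sqrt (real (d f) - 1) * (\<bar>\<alpha>\<bar> * sqrt (real (d g) - 1) + \<bar>\<beta>\<bar> * sqrt Bnd))"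
      using sp s bx[OF s] bz[OF s] df by (intro mult_left_mono mult_mono) (auto intro: sum_nonneg)
    finally show "p s * sqrt (\<Sum>r<mf. (cmod (X s (Suc r)))\<^sup>2) * sqrt (\<Sum>c<mg * mh. (cmod (Z s c))\<^sup>2)
        \<le> p s * (sqrt (real (d f) - 1) * (\<bar>\<alpha>\<bar> * sqrt (real (d g) - 1) + \<bar>\<beta>\<bar> * sqrt Bnd))" .
  qed
  also have "\<dots> = sqrt (real (d f) - 1) * (\<bar>\<alpha>\<bar> * sqrt (real (d g) - 1) + \<bar>\<beta>\<bar> * sqrt Bnd)"
    by (simp add: sum_distrib_right[symmetric] p1)
  finally show ?thesis unfolding NN_def Bnd_def .
qed

end
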